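(* Let $P=\{p_1,\dots,p_n\}\subset\mathbb{R}^2$ be in general position, $n\ge 3$. (a) The expansion cone $\bar X_0(P)$ is a pointed polyhedral cone (the origin is a vertex) of full dimension $2n-3$ in the subspace of normalized motions. (b) Let $v\in\bar X_0(P)$ and let $E(v)=\{ij:\langle p_i-p_j,v_i-v_j\rangle=0\}$. If $E(v)$ contains (i) two crossing edges, or (ii) a set of edges incident to a common vertex $p$ such that no angle at $p$ between consecutive edges of this set exceeds $\pi$, or (iii) all edges of the boundary of a convex polygon whose vertices are points of $P$, then $E(v)$ contains all edges of the complete graph on the endpoints of the involved edges; in case (iii) this complete graph also includes all points of $P$ lying inside the convex polygon.
   Context: General position: no three points collinear. Infinitesimal motions $v=(v_1,\dots,v_n)\in(\mathbb{R}^2)^n$ are normalized by $v_1^1=v_1^2=v_2^1=0$ (superscripts are coordinates; $p_1,p_2$ have different $y$-coordinates). The expansion cone $\bar X_0(P)$ is the set of normalized $v$ with $\langle p_i-p_j,v_i-v_j\rangle\ge0$ for all $i<j$ (expansive motions). *)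

theory Defs
  imports "HOL-Analysis.Analysis"
begin

text \<open>Point configurations are indexed by a finite type 'n (so n = CARD('n));
  a configuration is p :: real^2^'n (point i is p$i), an infinitesimal motion is
  v :: real^2^'n (velocity of point i is v$i). Coordinate 1 is x, coordinate 2 is y.\<close>

definition general_position :: "real^2^'n \<Rightarrow> bool" where
  "general_position p \<longleftrightarrow> inj (\<lambda>i. p$i) \<and>
     (\<forall>i j k. distinct [i,j,k] \<longrightarrow> \<not> collinear {p$i, p$j, p$k})"

definition normalized :: "'n \<Rightarrow> 'n \<Rightarrow> real^2^'n \<Rightarrow> bool" where
  "normalized i1 i2 v \<longleftrightarrow> (v$i1)$1 = 0 \<and> (v$i1)$2 = 0 \<and> (v$i2)$1 = 0"

definition expansion_cone :: "real^2^'n \<Rightarrow> 'n \<Rightarrow> 'n \<Rightarrow> (real^2^'n) set" where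
  "expansion_cone p i1 i2 =
     {v. normalized i1 i2 v \<and> (\<forall>i j. i \<noteq> j \<longrightarrow> (p$i - p$j) \<bullet> (v$i - v$j) \<ge> 0)}"

definition tight_edges :: "real^2^'n \<Rightarrow> real^2^'n \<Rightarrow> 'n set set" where
  "tight_edges p v = {{i,j} | i j. i \<noteq> j \<and> (p$i - p$j) \<bullet> (v$i - v$j) = 0}"

definition complete_edges :: "'n set \<Rightarrow> 'n set set" where
  "complete_edges S = {{i,j} | i j. i \<in> S \<and> j \<in> S \<and> i \<noteq> j}"

definition cross2 :: "real^2 \<Rightarrow> real^2 \<Rightarrow> real" where
  "cross2 a b = a$1 * b$2 - a$2 * b$1"

text \<open>The edges from vertex k to the vertices in J are such that no angle at p_k between
  (counterclockwise) consecutive edges exceeds pi: J is nonempty, and for every edge kj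
  there is an edge kj' reached from it by a counterclockwise rotation by an angle in (0, pi]
  (angle in (0,pi): positive cross product; angle exactly pi: opposite direction).\<close>
definition consecutive_angles_le_pi :: "real^2^'n \<Rightarrow> 'n \<Rightarrow> 'n set \<Rightarrow> bool" where
  "consecutive_angles_le_pi p k J \<longleftrightarrow> J \<noteq> {} \<and> k \<notin> J \<and>
     (\<forall>j\<in>J. \<exists>j'\<in>J. cross2 (p$j - p$k) (p$j' - p$k) > 0 \<or>
        (cross2 (p$j - p$k) (p$j' - p$k) = 0 \<and> (p$j - p$k) \<bullet> (p$j' - p$k) < 0))"

text \<open>Q is the vertex set of a convex polygon with vertices in P (at least 3 vertices, each an
  extreme point of the convex hull); its boundary edges are the pairs whose segment lies on the
  boundary of the polygon.\<close>
definition convex_polygon :: "real^2^'n \<Rightarrow> 'n set \<Rightarrow> bool" where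
  "convex_polygon p Q \<longleftrightarrow> card Q \<ge> 3 \<and>
     (\<forall>q\<in>Q. (p$q) extreme_point_of (convex hull ((\<lambda>i. p$i) ` Q)))"

definition polygon_boundary_edges :: "real^2^'n \<Rightarrow> 'n set \<Rightarrow> 'n set set" where
  "polygon_boundary_edges p Q = {{i,j} | i j. i \<in> Q \<and> j \<in> Q \<and> i \<noteq> j \<and>
     closed_segment (p$i) (p$j) \<subseteq> frontier (convex hull ((\<lambda>i. p$i) ` Q))}"

end

theory Submission
  imports Defs
begin


lemma inner2: "(x::real^2) \<bullet> y = x$1*y$1 + x$2*y$2" by (simp add: inner_vec_def sum_2)
lemma vec2_eq: "(x::real^2) = y \<longleftrightarrow> x$1 = y$1 \<and> x$2 = y$2" by (simp add: vec_eq_iff forall_2)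

lemma aux_par:
  fixes x1 x2 y1 y2 :: real
  assumes "x1*y2 - x2*y1 = 0" "x1*x1+x2*x2 \<noteq> 0"
  shows "y1 = ((y1*x1+y2*x2)/(x1*x1+x2*x2))*x1 \<and> y2 = ((y1*x1+y2*x2)/(x1*x1+x2*x2))*x2"
proof -
  have "y1 * (x1*x1+x2*x2) = (y1*x1+y2*x2)*x1" "y2 * (x1*x1+x2*x2) = (y1*x1+y2*x2)*x2"
    using assms(1) by algebra+
  then show ?thesis using assms(2) by (simp add: field_simps)
qed

lemma cross_coll0:
  fixes x y :: "real^2"
  assumes "cross2 x y = 0"
  shows "collinear {0,x,y}"
proof (cases "x = 0")
  case True then show ?thesis by (simp add: collinear_lemma)
next
  case False
  have nz: "x$1 * x$1 + x$2 * x$2 \<noteq> 0"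
    using False by (metis inner2 inner_eq_zero_iff)
  have "y = ((y$1*x$1+y$2*x$2)/(x$1*x$1+x$2*x$2)) *\<^sub>R x"
    using aux_par[of "x$1" "y$2" "x$2" "y$1", OF _ nz] assms
    unfolding vec2_eq cross2_def by simp
  then show ?thesis by (auto simp: collinear_lemma)
qed

lemma cross_coll:
  fixes a b c :: "real^2"
  assumes "cross2 (b - a) (c - a) = 0"
  shows "collinear {a,b,c}"
proof -
  have e: "{a,b,c} = {b,a,c}" by auto
  show ?thesis using e collinear_3[of b a c] cross_coll0[OF assms] by simp
qed


definition exv :: "real^2^'n \<Rightarrow> real^2^'n \<Rightarrow> 'n \<Rightarrow> 'n \<Rightarrow> real" where
  "exv p v i j = (p$i - p$j) \<bullet> (v$i - v$j)"

definition rot :: "real^2 \<Rightarrow> real^2" where "rot d = vector [- d$2, d$1]"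

lemma rot_comp [simp]: "rot d $ 1 = - d$2" "rot d $ 2 = d$1"
  by (simp_all add: rot_def)

lemma exv_sym: "exv p v i j = exv p v j i"
  unfolding exv_def by (metis inner_minus_left inner_minus_right minus_diff_eq)

lemma exv_self [simp]: "exv p v i i = 0" by (simp add: exv_def)

lemma rot_diff: "rot (x - y) = rot x - rot y"
  by (simp add: vec2_eq)

lemma inner_rot_self [simp]: "d \<bullet> rot d = 0"
  by (simp add: inner2)

lemma gp_cross:
  assumes "general_position p" "distinct [i,j,k]"
  shows "cross2 (p$j - p$i) (p$k - p$i) \<noteq> 0"
  using assms cross_coll unfolding general_position_def by blast

lemma perp2_real:
  fixes a1 a2 b1 b2 w1 w2 :: real
  assumes "a1*w1 + a2*w2 = 0" "b1*w1 + b2*w2 = 0" "a1*b2 - a2*b1 \<noteq> 0"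
  shows "w1 = 0 \<and> w2 = 0"
proof -
  have "w1 * (a1*b2 - a2*b1) = 0" "w2 * (a1*b2 - a2*b1) = 0"
    using assms(1,2) by algebra+
  then show ?thesis using assms(3) by simp
qed

lemma perp2:
  fixes a b w :: "real^2"
  assumes "a \<bullet> w = 0" "b \<bullet> w = 0" "cross2 a b \<noteq> 0"
  shows "w = 0"
  using perp2_real[of "a$1" "w$1" "a$2" "w$2" "b$1" "b$2"] assms
  by (simp add: inner2 cross2_def vec2_eq)

lemma perp_rot:
  fixes d e :: "real^2"
  assumes "d \<bullet> e = 0" "d \<noteq> 0"
  shows "e = (cross2 d e / (d \<bullet> d)) *\<^sub>R rot d"
proof -
  have nz: "d$1*d$1 + d$2*d$2 \<noteq> 0" using assms(2) by (metis inner2 inner_eq_zero_iff)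
  have h: "d$1*e$1 + d$2*e$2 = 0" using assms(1) by (simp add: inner2)
  have "e$1 * (d$1*d$1 + d$2*d$2) = (d$1*e$2 - d$2*e$1) * (- d$2)"
       "e$2 * (d$1*d$1 + d$2*d$2) = (d$1*e$2 - d$2*e$1) * (d$1)"
    using h by algebra+
  then show ?thesis using nz
    by (simp add: vec2_eq inner2 cross2_def field_simps)
qed

lemma fit0:
  fixes A B Q VA VB VQ :: "real^2"
  assumes "(A - B) \<bullet> (VA - VB) = 0" "(A - Q) \<bullet> (VA - VQ) = 0" "(B - Q) \<bullet> (VB - VQ) = 0"
    and "cross2 (B - A) (Q - A) \<noteq> 0"
  shows "VQ = VA + (cross2 (B - A) (VB - VA) / ((B - A) \<bullet> (B - A))) *\<^sub>R rot (Q - A)"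
proof -
  define \<omega> where "\<omega> = cross2 (B - A) (VB - VA) / ((B - A) \<bullet> (B - A))"
  have BA: "B - A \<noteq> 0" using assms(4) by (auto simp: cross2_def)
  have "(B - A) \<bullet> (VB - VA) = 0" using assms(1)
    by (metis inner_minus_left inner_minus_right minus_diff_eq)
  then have vb: "VB - VA = \<omega> *\<^sub>R rot (B - A)" using perp_rot BA \<omega>_def by blast
  define w where "w = VQ - VA - \<omega> *\<^sub>R rot (Q - A)"
  have 1: "(Q - A) \<bullet> w = 0"
  proof -
    have "(Q - A) \<bullet> (VQ - VA) = 0" using assms(2)
      by (metis inner_minus_left inner_minus_right minus_diff_eq)
    then show ?thesis by (simp add: w_def inner_diff_right)
  qed
  have 2: "(Q - B) \<bullet> w = 0"
  proof -
    have "(Q - B) \<bullet> (VQ - VB) = 0" using assms(3)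
      by (metis inner_minus_left inner_minus_right minus_diff_eq)
    moreover have "(Q - B) \<bullet> w = (Q - B) \<bullet> (VQ - VB) + (Q - B) \<bullet> ((VB - VA) - \<omega> *\<^sub>R rot (Q - A))"
    proof -
      have "w = (VQ - VB) + ((VB - VA) - \<omega> *\<^sub>R rot (Q - A))" by (simp add: w_def)
      then show ?thesis by (simp only: inner_add_right)
    qed
    moreover have "(Q - B) \<bullet> ((VB - VA) - \<omega> *\<^sub>R rot (Q - A)) = 0"
    proof -
      have "(VB - VA) - \<omega> *\<^sub>R rot (Q - A) = - \<omega> *\<^sub>R rot (Q - B)"
        unfolding vb by (simp add: vec2_eq algebra_simps)
      then show ?thesis by simp
    qed
    ultimately show ?thesis by simp
  qed
  have cr: "cross2 (Q - A) (Q - B) \<noteq> 0"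
    using assms(4) by (simp add: cross2_def algebra_simps)
  have "w = 0" using perp2[OF 1 2 cr] .
  moreover have "VQ = w + VA + \<omega> *\<^sub>R rot (Q - A)" by (simp add: w_def)
  ultimately show ?thesis by (simp add: \<omega>_def)
qed

lemma stress_id:
  fixes p v :: "real^2^'n"
  assumes "finite S" "(\<Sum>i\<in>S. l i) = 0" "(\<Sum>i\<in>S. l i *\<^sub>R p$i) = 0"
  shows "(\<Sum>i\<in>S. \<Sum>j\<in>S. l i * l j * exv p v i j) = 0"
proof -
  have e: "l i * l j * exv p v i j = l j * (l i * (p$i \<bullet> v$i)) + l i * (l j * (p$j \<bullet> v$j))
      - (l i *\<^sub>R p$i) \<bullet> (l j *\<^sub>R v$j) - (l j *\<^sub>R p$j) \<bullet> (l i *\<^sub>R v$i)" for i j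
    by (simp add: exv_def inner_diff_left inner_diff_right algebra_simps)
  have s1: "(\<Sum>i\<in>S. \<Sum>j\<in>S. l j * (l i * (p$i \<bullet> v$i))) = 0"
  proof -
    have "(\<Sum>i\<in>S. \<Sum>j\<in>S. l j * (l i * (p$i \<bullet> v$i))) = (\<Sum>i\<in>S. (\<Sum>j\<in>S. l j) * (l i * (p$i \<bullet> v$i)))"
      by (simp only: sum_distrib_right)
    then show ?thesis using assms(2) by simp
  qed
  have s2: "(\<Sum>i\<in>S. \<Sum>j\<in>S. l i * (l j * (p$j \<bullet> v$j))) = 0"
  proof -
    have "(\<Sum>i\<in>S. \<Sum>j\<in>S. l i * (l j * (p$j \<bullet> v$j))) = (\<Sum>i\<in>S. l i * (\<Sum>j\<in>S. l j * (p$j \<bullet> v$j)))"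
      by (simp only: sum_distrib_left)
    also have "\<dots> = (\<Sum>i\<in>S. l i) * (\<Sum>j\<in>S. l j * (p$j \<bullet> v$j))"
      by (simp only: sum_distrib_right)
    finally show ?thesis using assms(2) by simp
  qed
  have s3: "(\<Sum>i\<in>S. \<Sum>j\<in>S. (l i *\<^sub>R p$i) \<bullet> (l j *\<^sub>R v$j)) = 0"
  proof -
    have "(\<Sum>i\<in>S. \<Sum>j\<in>S. (l i *\<^sub>R p$i) \<bullet> (l j *\<^sub>R v$j)) = (\<Sum>i\<in>S. (l i *\<^sub>R p$i) \<bullet> (\<Sum>j\<in>S. l j *\<^sub>R v$j))"
      by (simp only: inner_sum_right)
    also have "\<dots> = (\<Sum>i\<in>S. l i *\<^sub>R p$i) \<bullet> (\<Sum>j\<in>S. l j *\<^sub>R v$j)"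
      by (simp only: inner_sum_left)
    finally show ?thesis using assms(3) by simp
  qed
  have s4: "(\<Sum>i\<in>S. \<Sum>j\<in>S. (l j *\<^sub>R p$j) \<bullet> (l i *\<^sub>R v$i)) = 0"
  proof -
    have "(\<Sum>i\<in>S. \<Sum>j\<in>S. (l j *\<^sub>R p$j) \<bullet> (l i *\<^sub>R v$i)) = (\<Sum>i\<in>S. (\<Sum>j\<in>S. l j *\<^sub>R p$j) \<bullet> (l i *\<^sub>R v$i))"
      by (simp only: inner_sum_left)
    then show ?thesis using assms(3) by simp
  qed
  show ?thesis
    unfolding e using s1 s2 s3 s4 by (simp add: sum.distrib sum_subtractf)
qed

lemma double_sum_zero:
  fixes f :: "'a \<Rightarrow> 'a \<Rightarrow> real"
  assumes "finite S" "\<forall>i\<in>S. \<forall>j\<in>S. 0 \<le> f i j" "(\<Sum>i\<in>S. \<Sum>j\<in>S. f i j) = 0"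
  shows "\<forall>i\<in>S. \<forall>j\<in>S. f i j = 0"
proof -
  have inner: "\<forall>i\<in>S. 0 \<le> (\<Sum>j\<in>S. f i j)" using assms(2) by (simp add: sum_nonneg)
  have "\<forall>i\<in>S. (\<Sum>j\<in>S. f i j) = 0"
    using sum_nonneg_eq_0_iff[OF assms(1), of "\<lambda>i. \<Sum>j\<in>S. f i j"] inner assms(3) by blast
  then show ?thesis using sum_nonneg_eq_0_iff[OF assms(1)] assms(2) by blast
qed

lemma stress_zero_ge:
  fixes p v :: "real^2^'n"
  assumes "finite S" "(\<Sum>i\<in>S. l i) = 0" "(\<Sum>i\<in>S. l i *\<^sub>R p$i) = 0"
    and "\<forall>i\<in>S. \<forall>j\<in>S. 0 \<le> l i * l j * exv p v i j"
  shows "\<forall>i\<in>S. \<forall>j\<in>S. l i * l j * exv p v i j = 0"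
  using double_sum_zero[OF assms(1) assms(4) stress_id[OF assms(1-3)]] .

lemma stress_zero_le:
  fixes p v :: "real^2^'n"
  assumes "finite S" "(\<Sum>i\<in>S. l i) = 0" "(\<Sum>i\<in>S. l i *\<^sub>R p$i) = 0"
    and "\<forall>i\<in>S. \<forall>j\<in>S. l i * l j * exv p v i j \<le> 0"
  shows "\<forall>i\<in>S. \<forall>j\<in>S. l i * l j * exv p v i j = 0"
proof -
  have h1: "\<forall>i\<in>S. \<forall>j\<in>S. 0 \<le> - (l i * l j * exv p v i j)" using assms(4) by simp
  have h2: "(\<Sum>i\<in>S. \<Sum>j\<in>S. - (l i * l j * exv p v i j)) = 0"
    using stress_id[OF assms(1-3)] by (simp add: sum_negf)
  have "\<forall>i\<in>S. \<forall>j\<in>S. - (l i * l j * exv p v i j) = 0" using double_sum_zero[OF assms(1) h1 h2] .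
  then show ?thesis by simp
qed


lemma seg_cross:
  fixes x y z :: "real^2"
  assumes "z = (1 - t) *\<^sub>R x + t *\<^sub>R y"
  shows "cross2 (x - z) (y - z) = 0"
proof -
  have e: "(x - z)$1 = t*(x$1 - y$1)" "(x - z)$2 = t*(x$2 - y$2)"
    "(y - z)$1 = (1-t)*(y$1 - x$1)" "(y - z)$2 = (1-t)*(y$2 - x$2)"
  proof -
    have zc: "z$1 = (1 - t) * x$1 + t * y$1" "z$2 = (1 - t) * x$2 + t * y$2"
      using assms by simp_all
    show "(x - z)$1 = t*(x$1 - y$1)" "(x - z)$2 = t*(x$2 - y$2)"
      "(y - z)$1 = (1-t)*(y$1 - x$1)" "(y - z)$2 = (1-t)*(y$2 - x$2)"
      by (simp_all add: zc algebra_simps)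
  qed
  show ?thesis unfolding cross2_def e by algebra
qed

lemma part_i:
  fixes p v :: "real^2^'n"
  assumes gp: "general_position p" and ex: "\<forall>i j. 0 \<le> exv p v i j"
    and dist: "distinct [a,b,c,d]" and ab: "exv p v a b = 0" and cd: "exv p v c d = 0"
    and seg: "closed_segment (p$a) (p$b) \<inter> closed_segment (p$c) (p$d) \<noteq> {}"
  shows "\<forall>i\<in>{a,b,c,d}. \<forall>j\<in>{a,b,c,d}. exv p v i j = 0"
proof -
  obtain z where z1: "z \<in> closed_segment (p$a) (p$b)" and z2: "z \<in> closed_segment (p$c) (p$d)"
    using seg by blast
  obtain s where s: "0 \<le> s" "s \<le> 1" "z = (1 - s) *\<^sub>R p$a + s *\<^sub>R p$b"
    using z1 unfolding closed_segment_def by blast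
  obtain t where t: "0 \<le> t" "t \<le> 1" "z = (1 - t) *\<^sub>R p$c + t *\<^sub>R p$d"
    using z2 unfolding closed_segment_def by blast
  have s0: "s \<noteq> 0"
  proof
    assume "s = 0" then have "z = p$a" using s by simp
    then have "cross2 (p$c - p$a) (p$d - p$a) = 0" using seg_cross[OF t(3)] by simp
    moreover have "distinct [a,c,d]" using dist by auto
    ultimately show False using gp_cross[OF gp] by blast
  qed
  have s1: "s \<noteq> 1"
  proof
    assume "s = 1" then have "z = p$b" using s by simp
    then have "cross2 (p$c - p$b) (p$d - p$b) = 0" using seg_cross[OF t(3)] by simp
    moreover have "distinct [b,c,d]" using dist by auto
    ultimately show False using gp_cross[OF gp] by blast
  qed
  have t0: "t \<noteq> 0"
  proof
    assume "t = 0" then have "z = p$c" using t by simp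
    then have "cross2 (p$a - p$c) (p$b - p$c) = 0" using seg_cross[OF s(3)] by simp
    moreover have "distinct [c,a,b]" using dist by auto
    ultimately show False using gp_cross[OF gp] by blast
  qed
  have t1: "t \<noteq> 1"
  proof
    assume "t = 1" then have "z = p$d" using t by simp
    then have "cross2 (p$a - p$d) (p$b - p$d) = 0" using seg_cross[OF s(3)] by simp
    moreover have "distinct [d,a,b]" using dist by auto
    ultimately show False using gp_cross[OF gp] by blast
  qed
  define l where "l = (\<lambda>i. if i = a then 1 - s else if i = b then s else if i = c then -(1-t) else -t)"
  let ?S = "{a,b,c,d}"
  have la: "l a = 1 - s" "l b = s" "l c = -(1-t)" "l d = -t" using dist by (auto simp: l_def)
  have pos: "0 < l i" if "i \<in> {a,b}" for i using that la s s0 s1 by auto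
  have neg: "l i < 0" if "i \<in> {c,d}" for i using that la t t0 t1 by auto
  have sum1: "(\<Sum>i\<in>?S. l i) = 0" using dist la by simp
  have sum2: "(\<Sum>i\<in>?S. l i *\<^sub>R p$i) = 0"
  proof -
    have "(\<Sum>i\<in>?S. l i *\<^sub>R p$i) = l a *\<^sub>R p$a + l b *\<^sub>R p$b + (l c *\<^sub>R p$c + l d *\<^sub>R p$d)"
      using dist by (simp add: add.assoc)
    also have "\<dots> = ((1-s) *\<^sub>R p$a + s *\<^sub>R p$b) - ((1-t) *\<^sub>R p$c + t *\<^sub>R p$d)"
      by (simp only: la) (simp add: algebra_simps)
    also have "\<dots> = 0" using s(3) t(3) by simp
    finally show ?thesis .
  qed
  have le: "\<forall>i\<in>?S. \<forall>j\<in>?S. l i * l j * exv p v i j \<le> 0"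
  proof (intro ballI)
    fix i j assume i: "i \<in> ?S" and j: "j \<in> ?S"
    show "l i * l j * exv p v i j \<le> 0"
    proof (cases "(i \<in> {a,b} \<and> j \<in> {a,b}) \<or> (i \<in> {c,d} \<and> j \<in> {c,d})")
      case True
      then have "exv p v i j = 0" using ab cd exv_sym[of p v a b] exv_sym[of p v c d] by auto
      then show ?thesis by simp
    next
      case False
      then have "(i \<in> {a,b} \<and> j \<in> {c,d}) \<or> (i \<in> {c,d} \<and> j \<in> {a,b})" using i j by blast
      then have "l i * l j < 0"
      proof
        assume h: "i \<in> {a,b} \<and> j \<in> {c,d}"
        then have "0 < l i" "l j < 0" using pos neg by blast+
        then show ?thesis by (simp add: mult_pos_neg)
      next
        assume h: "i \<in> {c,d} \<and> j \<in> {a,b}"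
        then have "l i < 0" "0 < l j" using pos neg by blast+
        then show ?thesis by (simp add: mult_neg_pos)
      qed
      then show ?thesis using ex by (simp add: mult_nonpos_nonneg less_imp_le)
    qed
  qed
  have z: "\<forall>i\<in>?S. \<forall>j\<in>?S. l i * l j * exv p v i j = 0"
    using stress_zero_le[OF _ sum1 sum2 le] by simp
  have nz: "l i \<noteq> 0" if "i \<in> ?S" for i using that pos neg by fastforce
  show ?thesis
  proof (intro ballI)
    fix i j assume i: "i \<in> ?S" and j: "j \<in> ?S"
    have "l i * l j * exv p v i j = 0" using z i j by blast
    then show "exv p v i j = 0" using nz[OF i] nz[OF j] by simp
  qed
qed

lemma max_elem:
  assumes "finite J" "J \<noteq> {}" "\<forall>x\<in>J. \<not> R x x"
    and "\<forall>x\<in>J. \<forall>y\<in>J. \<forall>z\<in>J. R x y \<longrightarrow> R y z \<longrightarrow> R x z"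
  shows "\<exists>m\<in>J. \<forall>x\<in>J. \<not> R m x"
  using assms
proof (induction J rule: finite_ne_induct)
  case (singleton x)
  have "\<not> R x x" using singleton.prems(1) by simp
  then show ?case by simp
next
  case (insert x F)
  have p1: "\<forall>y\<in>F. \<not> R y y" using insert.prems(1) by simp
  have p2: "\<forall>a\<in>F. \<forall>b\<in>F. \<forall>c\<in>F. R a b \<longrightarrow> R b c \<longrightarrow> R a c"
  proof (intro ballI impI)
    fix a b c assume "a \<in> F" "b \<in> F" "c \<in> F" "R a b" "R b c"
    then show "R a c" using insert.prems(2) by (meson insertCI)
  qed
  obtain m where m: "m \<in> F" "\<forall>y\<in>F. \<not> R m y" using insert.IH[OF p1 p2] by blast
  show ?case
  proof (cases "R m x")
    case True
    have "\<forall>y\<in>insert x F. \<not> R x y"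
    proof
      fix y assume y: "y \<in> insert x F"
      show "\<not> R x y"
      proof
        assume r: "R x y"
        have irr: "\<not> R x x" using insert.prems(1) by simp
        then have "y \<noteq> x" using r by auto
        then have yF: "y \<in> F" using y by simp
        have mx: "m \<in> insert x F" "x \<in> insert x F" "y \<in> insert x F" using m(1) yF by auto
        have "R m y" using insert.prems(2) mx True r by meson
        then show False using m(2) yF by blast
      qed
    qed
    then show ?thesis by blast
  next
    case False
    have "\<forall>y\<in>insert x F. \<not> R m y" using False m(2) by simp
    then show ?thesis using m(1) by blast
  qed
qed

lemma cross_ident:
  fixes a u u' u'' :: "real^2"
  shows "cross2 u u' * (a \<bullet> u'') + cross2 u' u'' * (a \<bullet> u) + cross2 u'' u * (a \<bullet> u') = 0"
  by (simp add: cross2_def inner2 algebra_simps)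

lemma perp_cross:
  fixes a x y :: "real^2"
  assumes "a \<noteq> 0" "a \<bullet> x = 0" "a \<bullet> y = 0"
  shows "cross2 x y = 0"
  using perp2[of x a y] assms by (auto simp: inner_commute)

lemma cross_antisym: "cross2 x y = - cross2 y x"
  by (simp add: cross2_def)

lemma no_halfplane:
  fixes u :: "'a \<Rightarrow> real^2"
  assumes "finite J" "J \<noteq> {}" "a \<noteq> 0" "\<forall>q\<in>J. 0 \<le> a \<bullet> u q"
    and "\<forall>q\<in>J. \<forall>q'\<in>J. q \<noteq> q' \<longrightarrow> cross2 (u q) (u q') \<noteq> 0"
    and "\<forall>q\<in>J. \<exists>q'\<in>J. 0 < cross2 (u q) (u q')"
  shows False
proof -
  define R where "R = (\<lambda>q q'. 0 < cross2 (u q) (u q'))"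
  have irr: "\<forall>x\<in>J. \<not> R x x" by (simp add: R_def cross2_def)
  have tr: "\<forall>x\<in>J. \<forall>y\<in>J. \<forall>z\<in>J. R x y \<longrightarrow> R y z \<longrightarrow> R x z"
  proof (intro ballI impI)
    fix x y z assume xyz: "x \<in> J" "y \<in> J" "z \<in> J" and r1: "R x y" and r2: "R y z"
    let ?A = "cross2 (u x) (u y)" and ?B = "cross2 (u y) (u z)" and ?C = "cross2 (u z) (u x)"
    have A: "0 < ?A" and B: "0 < ?B" using r1 r2 by (auto simp: R_def)
    have xz: "x \<noteq> z"
    proof
      assume xz: "x = z" then have "?B = - ?A" using cross_antisym[of "u y" "u x"] by simp
      then show False using A B by simp
    qed
    have C0: "?C \<noteq> 0" using assms(5) xyz xz by auto
    have id: "?A * (a \<bullet> u z) + ?B * (a \<bullet> u x) + ?C * (a \<bullet> u y) = 0" by (rule cross_ident)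
    have nn: "0 \<le> a \<bullet> u x" "0 \<le> a \<bullet> u y" "0 \<le> a \<bullet> u z" using assms(4) xyz by auto
    have "\<not> 0 < ?C"
    proof
      assume C: "0 < ?C"
      have t1: "0 \<le> ?A * (a \<bullet> u z)" "0 \<le> ?B * (a \<bullet> u x)" "0 \<le> ?C * (a \<bullet> u y)"
        using A B C nn by auto
      then have "?A * (a \<bullet> u z) = 0" "?B * (a \<bullet> u x) = 0" "?C * (a \<bullet> u y) = 0"
        using id by linarith+
      then have "a \<bullet> u x = 0" "a \<bullet> u y = 0" using A B C by auto
      then have "?A = 0" using perp_cross[OF assms(3)] by blast
      then show False using A by simp
    qed
    then have "?C < 0" using C0 by linarith
    then show "R x z" unfolding R_def using cross_antisym[of "u z" "u x"] by linarith
  qed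
  obtain m where m: "m \<in> J" "\<forall>x\<in>J. \<not> R m x" using max_elem[OF assms(1,2) irr tr] by blast
  then show False using assms(6) by (auto simp: R_def)
qed


lemma pos_comb_one:
  fixes u :: "'a \<Rightarrow> real^2"
  assumes fin: "finite J" and j: "j \<in> J"
    and dis: "\<forall>q\<in>J. \<forall>q'\<in>J. q \<noteq> q' \<longrightarrow> cross2 (u q) (u q') \<noteq> 0"
    and ccw: "\<forall>q\<in>J. \<exists>q'\<in>J. 0 < cross2 (u q) (u q')"
  shows "\<exists>\<nu>. (\<forall>q\<in>J. 0 \<le> \<nu> q) \<and> 0 < \<nu> j \<and> (\<Sum>q\<in>J. \<nu> q *\<^sub>R u q) = 0"
proof (rule ccontr)
  assume nex: "\<not> ?thesis"
  define K where "K = {(\<Sum>q\<in>J. \<nu> q *\<^sub>R u q) | \<nu>. (\<forall>q\<in>J. 0 \<le> \<nu> q) \<and> 0 < \<nu> j}"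
  have "0 \<notin> K" using nex unfolding K_def by auto
  moreover have "convex K"
    unfolding convex_def
  proof (intro ballI allI impI)
    fix x y and s t :: real
    assume x: "x \<in> K" and y: "y \<in> K" and st: "0 \<le> s" "0 \<le> t" "s + t = 1"
    obtain \<nu> where nu: "\<forall>q\<in>J. 0 \<le> \<nu> q" "0 < \<nu> j" "x = (\<Sum>q\<in>J. \<nu> q *\<^sub>R u q)"
      using x unfolding K_def by blast
    obtain \<nu>' where nu': "\<forall>q\<in>J. 0 \<le> \<nu>' q" "0 < \<nu>' j" "y = (\<Sum>q\<in>J. \<nu>' q *\<^sub>R u q)"
      using y unfolding K_def by blast
    define \<rho> where "\<rho> = (\<lambda>q. s * \<nu> q + t * \<nu>' q)"
    have "s *\<^sub>R x + t *\<^sub>R y = (\<Sum>q\<in>J. \<rho> q *\<^sub>R u q)"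
      by (simp add: nu(3) nu'(3) \<rho>_def scaleR_sum_right sum.distrib scaleR_add_left)
    moreover have "\<forall>q\<in>J. 0 \<le> \<rho> q" using nu nu' st by (simp add: \<rho>_def)
    moreover have "0 < \<rho> j"
    proof (cases "s = 0")
      case True then have "t = 1" using st by simp
      then show ?thesis using True nu'(2) by (simp add: \<rho>_def)
    next
      case False then have "0 < s" using st by simp
      then have "0 < s * \<nu> j" using nu(2) by simp
      moreover have "0 \<le> t * \<nu>' j" using st nu'(2) by simp
      ultimately show ?thesis by (simp add: \<rho>_def)
    qed
    ultimately show "s *\<^sub>R x + t *\<^sub>R y \<in> K" unfolding K_def by blast
  qed
  ultimately obtain a where a: "a \<noteq> 0" "\<forall>x\<in>K. 0 \<le> a \<bullet> x"
    using separating_hyperplane_set_0 by blast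
  have half: "\<forall>q\<in>J. 0 \<le> a \<bullet> u q"
  proof (rule ccontr)
    assume "\<not> (\<forall>q\<in>J. 0 \<le> a \<bullet> u q)"
    then obtain q where q: "q \<in> J" "a \<bullet> u q < 0" by auto
    define N where "N = (\<bar>a \<bullet> u j\<bar> + 1) / (- (a \<bullet> u q))"
    have N: "0 < N" unfolding N_def by (rule divide_pos_pos) (use q in auto)
    have NN: "N * (a \<bullet> u q) = - (\<bar>a \<bullet> u j\<bar> + 1)" using q by (simp add: N_def)
    define \<nu> where "\<nu> = (\<lambda>i. (if i = q then N else 0) + (if i = j then 1 else (0::real)))"
    have e1: "(\<Sum>i\<in>J. (if i = q then N else 0) *\<^sub>R u i) = N *\<^sub>R u q"
    proof -
      have "(\<Sum>i\<in>J. (if i = q then N else 0) *\<^sub>R u i) = (\<Sum>i\<in>J. if i = q then N *\<^sub>R u q else 0)"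
        by (rule sum.cong) auto
      then show ?thesis using q(1) fin by simp
    qed
    have e2: "(\<Sum>i\<in>J. (if i = j then 1 else 0) *\<^sub>R u i) = u j"
    proof -
      have "(\<Sum>i\<in>J. (if i = j then 1 else (0::real)) *\<^sub>R u i) = (\<Sum>i\<in>J. if i = j then u j else 0)"
        by (rule sum.cong) auto
      then show ?thesis using j fin by simp
    qed
    have "(\<Sum>i\<in>J. \<nu> i *\<^sub>R u i) = (\<Sum>i\<in>J. (if i = q then N else 0) *\<^sub>R u i) + (\<Sum>i\<in>J. (if i = j then 1 else 0) *\<^sub>R u i)"
      by (simp only: \<nu>_def scaleR_add_left sum.distrib)
    then have "(\<Sum>i\<in>J. \<nu> i *\<^sub>R u i) = N *\<^sub>R u q + u j" using e1 e2 by simp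
    moreover have "\<forall>i\<in>J. 0 \<le> \<nu> i" using N by (simp add: \<nu>_def)
    moreover have "0 < \<nu> j" using N by (simp add: \<nu>_def)
    ultimately have ex: "\<exists>\<nu>'. N *\<^sub>R u q + u j = (\<Sum>i\<in>J. \<nu>' i *\<^sub>R u i) \<and> (\<forall>i\<in>J. 0 \<le> \<nu>' i) \<and> 0 < \<nu>' j"
      by (intro exI[of _ \<nu>]) simp
    have "N *\<^sub>R u q + u j \<in> K" unfolding K_def using ex by (simp only: mem_Collect_eq)
    then have "0 \<le> a \<bullet> (N *\<^sub>R u q + u j)" using a by blast
    then have "0 \<le> N * (a \<bullet> u q) + a \<bullet> u j" by (simp add: inner_add_right)
    then show False using NN by linarith
  qed
  show False
    using no_halfplane[OF fin _ a(1) half dis ccw] j by blast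
qed

lemma pos_comb_all:
  fixes u :: "'a \<Rightarrow> real^2"
  assumes fin: "finite J"
    and dis: "\<forall>q\<in>J. \<forall>q'\<in>J. q \<noteq> q' \<longrightarrow> cross2 (u q) (u q') \<noteq> 0"
    and ccw: "\<forall>q\<in>J. \<exists>q'\<in>J. 0 < cross2 (u q) (u q')"
  shows "\<exists>\<mu>. (\<forall>q\<in>J. 0 < \<mu> q) \<and> (\<Sum>q\<in>J. \<mu> q *\<^sub>R u q) = 0"
proof -
  have "\<forall>j\<in>J. \<exists>\<nu>. (\<forall>q\<in>J. 0 \<le> \<nu> q) \<and> 0 < \<nu> j \<and> (\<Sum>q\<in>J. \<nu> q *\<^sub>R u q) = 0"
    using pos_comb_one[OF fin _ dis ccw] by blast
  from bchoice[OF this] obtain N where N: "\<forall>j\<in>J. (\<forall>q\<in>J. 0 \<le> N j q) \<and> 0 < N j j \<and> (\<Sum>q\<in>J. N j q *\<^sub>R u q) = 0"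
    by blast
  define \<mu> where "\<mu> = (\<lambda>q. \<Sum>j\<in>J. N j q)"
  have "\<forall>q\<in>J. 0 < \<mu> q"
  proof
    fix q assume q: "q \<in> J"
    have "N q q \<le> (\<Sum>j\<in>J. N j q)"
      using member_le_sum[of q J "\<lambda>j. N j q"] q N fin by auto
    moreover have "0 < N q q" using N q by blast
    ultimately show "0 < \<mu> q" by (simp add: \<mu>_def)
  qed
  moreover have "(\<Sum>q\<in>J. \<mu> q *\<^sub>R u q) = 0"
  proof -
    have "(\<Sum>q\<in>J. \<mu> q *\<^sub>R u q) = (\<Sum>q\<in>J. \<Sum>j\<in>J. N j q *\<^sub>R u q)"
      by (simp add: \<mu>_def scaleR_sum_left)
    also have "\<dots> = (\<Sum>j\<in>J. \<Sum>q\<in>J. N j q *\<^sub>R u q)" by (rule sum.swap)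
    also have "\<dots> = 0" using N by simp
    finally show ?thesis .
  qed
  ultimately show ?thesis by blast
qed

lemma part_ii:
  fixes p v :: "real^2^'n"
  assumes gp: "general_position p" and ex: "\<forall>i j. 0 \<le> exv p v i j"
    and ang: "consecutive_angles_le_pi p k J" and tk: "\<forall>j\<in>J. exv p v k j = 0"
  shows "\<forall>i\<in>insert k J. \<forall>j\<in>insert k J. exv p v i j = 0"
proof -
  have kJ: "k \<notin> J" using ang by (simp add: consecutive_angles_le_pi_def)
  have fin: "finite J" by simp
  define u where "u = (\<lambda>q. p$q - p$k)"
  have dis: "\<forall>q\<in>J. \<forall>q'\<in>J. q \<noteq> q' \<longrightarrow> cross2 (u q) (u q') \<noteq> 0"
  proof (intro ballI impI)
    fix q q' assume "q \<in> J" "q' \<in> J" "q \<noteq> q'"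
    then have "distinct [k,q,q']" using kJ by auto
    then show "cross2 (u q) (u q') \<noteq> 0" using gp_cross[OF gp] by (simp add: u_def)
  qed
  have ccw: "\<forall>q\<in>J. \<exists>q'\<in>J. 0 < cross2 (u q) (u q')"
  proof
    fix q assume q: "q \<in> J"
    obtain q' where q': "q' \<in> J" and c: "cross2 (u q) (u q') > 0 \<or>
        (cross2 (u q) (u q') = 0 \<and> (u q) \<bullet> (u q') < 0)"
      using ang q unfolding consecutive_angles_le_pi_def u_def by blast
    have "\<not> (cross2 (u q) (u q') = 0 \<and> (u q) \<bullet> (u q') < 0)"
    proof
      assume h: "cross2 (u q) (u q') = 0 \<and> (u q) \<bullet> (u q') < 0"
      show False
      proof (cases "q = q'")
        case True
        have h3: "u q \<bullet> u q < 0" using h True by simp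
        then show False using inner_ge_zero[of "u q"] by linarith
      next
        case False then show False using dis q q' h by blast
      qed
    qed
    then show "\<exists>q'\<in>J. 0 < cross2 (u q) (u q')" using c q' by blast
  qed
  obtain \<mu> where mu: "\<forall>q\<in>J. 0 < \<mu> q" "(\<Sum>q\<in>J. \<mu> q *\<^sub>R u q) = 0"
    using pos_comb_all[OF fin dis ccw] by blast
  define M where "M = (\<Sum>q\<in>J. \<mu> q)"
  define l where "l = (\<lambda>i. if i = k then - M else \<mu> i)"
  let ?S = "insert k J"
  have lJ: "\<forall>q\<in>J. l q = \<mu> q" using kJ by (auto simp: l_def)
  have sumJ: "(\<Sum>q\<in>J. l q) = M" using lJ by (simp add: M_def)
  have lk: "l k = - M" by (simp add: l_def)
  have sum1: "(\<Sum>i\<in>?S. l i) = 0" using kJ fin by (simp add: lk sumJ)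
  have "(\<Sum>q\<in>J. \<mu> q *\<^sub>R p$q) - M *\<^sub>R p$k = (\<Sum>q\<in>J. \<mu> q *\<^sub>R u q)"
    by (simp add: u_def scaleR_diff_right sum_subtractf M_def scaleR_sum_left)
  then have sp: "(\<Sum>q\<in>J. \<mu> q *\<^sub>R p$q) - M *\<^sub>R p$k = 0" using mu(2) by simp
  have sum2: "(\<Sum>i\<in>?S. l i *\<^sub>R p$i) = 0"
  proof -
    have "(\<Sum>i\<in>?S. l i *\<^sub>R p$i) = l k *\<^sub>R p$k + (\<Sum>q\<in>J. l q *\<^sub>R p$q)"
      using kJ fin by simp
    also have "(\<Sum>q\<in>J. l q *\<^sub>R p$q) = (\<Sum>q\<in>J. \<mu> q *\<^sub>R p$q)" using lJ by simp
    finally show ?thesis using sp by (simp add: l_def)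
  qed
  have ge: "\<forall>i\<in>?S. \<forall>j\<in>?S. 0 \<le> l i * l j * exv p v i j"
  proof (intro ballI)
    fix i j assume i: "i \<in> ?S" and j: "j \<in> ?S"
    show "0 \<le> l i * l j * exv p v i j"
    proof (cases "i = k \<or> j = k")
      case True
      then have "exv p v i j = 0"
      proof
        assume "i = k" then show ?thesis using tk j by (cases "j = k") auto
      next
        assume jk: "j = k"
        show ?thesis
        proof (cases "i = k")
          case True then show ?thesis using jk by simp
        next
          case False then have "i \<in> J" using i by simp
          then show ?thesis using tk jk exv_sym[of p v i k] by simp
        qed
      qed
      then show ?thesis by simp
    next
      case False
      then have "0 < l i" "0 < l j" using i j lJ mu(1) by auto
      then show ?thesis using ex by simp
    qed
  qed
  have z: "\<forall>i\<in>?S. \<forall>j\<in>?S. l i * l j * exv p v i j = 0"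
    using stress_zero_ge[OF _ sum1 sum2 ge] by simp
  have M: "0 < M"
  proof -
    have "J \<noteq> {}" using ang by (simp add: consecutive_angles_le_pi_def)
    then show ?thesis unfolding M_def using mu(1) fin by (simp add: sum_pos)
  qed
  have nz: "l i \<noteq> 0" if "i \<in> ?S" for i using that lJ mu(1) M by (auto simp: l_def)
  show ?thesis
  proof (intro ballI)
    fix i j assume i: "i \<in> ?S" and j: "j \<in> ?S"
    have "l i * l j * exv p v i j = 0" using z i j by blast
    then show "exv p v i j = 0" using nz[OF i] nz[OF j] by simp
  qed
qed


definition nb :: "real^2^'n \<Rightarrow> 'n set \<Rightarrow> 'n \<Rightarrow> 'n \<Rightarrow> bool" where
  "nb p Q i j \<longleftrightarrow> i \<in> Q \<and> j \<in> Q \<and> i \<noteq> j \<and>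
     ((\<forall>q\<in>Q-{i,j}. 0 < cross2 (p$j - p$i) (p$q - p$i)) \<or> (\<forall>q\<in>Q-{i,j}. cross2 (p$j - p$i) (p$q - p$i) < 0))"

lemma cross_swap: "cross2 (A - B) (X - B) = - cross2 (B - A) (X - A)"
  for A B X :: "real^2" by (simp add: cross2_def algebra_simps)

lemma cross_antisym2: "cross2 x y = - cross2 y x"
  by (simp add: cross2_def)

lemma nb_sym: assumes "nb p Q i j" shows "nb p Q j i"
proof -
  have e: "Q - {j,i} = Q - {i,j}" by auto
  have s: "cross2 (p$i - p$j) (p$q - p$j) = - cross2 (p$j - p$i) (p$q - p$i)" for q
    by (rule cross_swap)
  show ?thesis using assms unfolding nb_def e s by auto
qed

lemma nb_sub:
  assumes "nb p Q x y" "Q' \<subseteq> Q" "x \<in> Q'" "y \<in> Q'"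
  shows "nb p Q' x y"
  using assms unfolding nb_def by blast

lemma nb_three:
  assumes "nb p Q i a" "nb p Q i b" "nb p Q i c" "distinct [a,b,c]"
  shows False
proof -
  let ?X = "\<lambda>x y. cross2 (p$x - p$i) (p$y - p$i)"
  have ia: "i \<noteq> a" "i \<noteq> b" "i \<noteq> c" "a \<in> Q" "b \<in> Q" "c \<in> Q"
    using assms unfolding nb_def by auto
  have h1: "(0 < ?X a b \<and> 0 < ?X a c) \<or> (?X a b < 0 \<and> ?X a c < 0)"
    using assms(1,4) ia unfolding nb_def by auto
  have h2: "(0 < ?X b a \<and> 0 < ?X b c) \<or> (?X b a < 0 \<and> ?X b c < 0)"
    using assms(2,4) ia unfolding nb_def by auto
  have h3: "(0 < ?X c a \<and> 0 < ?X c b) \<or> (?X c a < 0 \<and> ?X c b < 0)"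
    using assms(3,4) ia unfolding nb_def by auto
  have a1: "?X b a = - ?X a b" "?X c a = - ?X a c" "?X c b = - ?X b c"
    using cross_antisym2 by blast+
  show False using h1 h2 h3 unfolding a1 by linarith
qed

lemma nb_exists:
  assumes gp: "general_position p" and fin: "finite Q" and i: "i \<in> Q" and card: "3 \<le> card Q"
    and cp: "p$i \<notin> convex hull ((\<lambda>k. p$k) ` (Q - {i}))"
  shows "\<exists>a b. a \<noteq> b \<and> nb p Q i a \<and> nb p Q i b"
proof -
  let ?Q' = "Q - {i}"
  have fin': "finite ?Q'" using fin by simp
  have cl: "closed (convex hull ((\<lambda>k. p$k) ` ?Q'))"
    using fin' by (simp add: compact_imp_closed compact_convex_hull finite_imp_compact)
  obtain c \<beta> where c1: "c \<bullet> p$i < \<beta>" and c2: "\<forall>x\<in>convex hull ((\<lambda>k. p$k) ` ?Q'). \<beta> < c \<bullet> x"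
    using separating_hyperplane_closed_point[OF convex_convex_hull cl cp] by blast
  define u where "u = (\<lambda>x. p$x - p$i)"
  have pos: "0 < c \<bullet> u q" if "q \<in> ?Q'" for q
  proof -
    have "p$q \<in> convex hull ((\<lambda>k. p$k) ` ?Q')" using that by (simp add: hull_inc)
    then have "\<beta> < c \<bullet> p$q" using c2 by blast
    then show ?thesis using c1 by (simp add: u_def inner_diff_right)
  qed
  have c2q: "card ?Q' \<ge> 2" using card fin i by (simp add: card_Diff_singleton)
  have ne: "?Q' \<noteq> {}"
  proof
    assume h: "?Q' = {}" then have "card ?Q' = 0" by (simp only: h card.empty)
    then show False using c2q by linarith
  qed
  then obtain q0 where q0: "q0 \<in> ?Q'" by blast
  have cnz: "c \<noteq> 0" using pos[OF q0] by auto
  have cc: "0 < c \<bullet> c" using cnz by simp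
  define f where "f = (\<lambda>x. cross2 c (u x) / (c \<bullet> u x))"
  have fx: "cross2 c (u x) = f x * (c \<bullet> u x)" if "x \<in> ?Q'" for x
    using pos[OF that] by (simp add: f_def)
  have ident: "cross2 x y * (c \<bullet> c) = (c \<bullet> x) * cross2 c y - cross2 c x * (c \<bullet> y)" for x y :: "real^2"
    by (simp add: cross2_def inner2 algebra_simps)
  have "Max (f ` ?Q') \<in> f ` ?Q'" using fin' ne by (intro Max_in) auto
  then obtain a where a: "a \<in> ?Q'" "f a = Max (f ` ?Q')" by (metis imageE)
  have amax: "f q \<le> f a" if "q \<in> ?Q'" for q using a fin' that by simp
  have "Min (f ` ?Q') \<in> f ` ?Q'" using fin' ne by (intro Min_in) auto
  then obtain b where b: "b \<in> ?Q'" "f b = Min (f ` ?Q')" by (metis imageE)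
  have bmin: "f b \<le> f q" if "q \<in> ?Q'" for q using b fin' that by simp
  have cr0: "cross2 (u x) (u y) \<noteq> 0" if "x \<in> ?Q'" "y \<in> ?Q'" "x \<noteq> y" for x y
  proof -
    have "distinct [i,x,y]" using that by auto
    then show ?thesis using gp_cross[OF gp, of i x y] by (simp add: u_def)
  qed
  have sa: "cross2 (u a) (u q) < 0" if "q \<in> ?Q'" "q \<noteq> a" for q
  proof -
    have "cross2 (u a) (u q) * (c \<bullet> c) = (c \<bullet> u a) * (c \<bullet> u q) * (f q - f a)"
      unfolding ident fx[OF a(1)] fx[OF that(1)] by (simp add: algebra_simps)
    also have "\<dots> \<le> 0" using pos[OF a(1)] pos[OF that(1)] amax[OF that(1)]
      by (simp add: mult_nonneg_nonpos)
    finally have "cross2 (u a) (u q) * (c \<bullet> c) \<le> 0" .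
    then have "cross2 (u a) (u q) \<le> 0" using cc by (simp add: mult_le_0_iff)
    then show ?thesis using cr0[OF a(1) that(1)] that(2) by fastforce
  qed
  have sb: "0 < cross2 (u b) (u q)" if "q \<in> ?Q'" "q \<noteq> b" for q
  proof -
    have "cross2 (u b) (u q) * (c \<bullet> c) = (c \<bullet> u b) * (c \<bullet> u q) * (f q - f b)"
      unfolding ident fx[OF b(1)] fx[OF that(1)] by (simp add: algebra_simps)
    also have "\<dots> \<ge> 0" using pos[OF b(1)] pos[OF that(1)] bmin[OF that(1)]
      by simp
    finally have "cross2 (u b) (u q) * (c \<bullet> c) \<ge> 0" .
    then have "cross2 (u b) (u q) \<ge> 0" using cc by (simp add: zero_le_mult_iff)
    then show ?thesis using cr0[OF b(1) that(1)] that(2) by fastforce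
  qed
  have nba: "nb p Q i a"
    unfolding nb_def using a(1) i sa by (auto simp: u_def)
  have nbb: "nb p Q i b"
    unfolding nb_def using b(1) i sb by (auto simp: u_def)
  have "a \<noteq> b"
  proof
    assume ab: "a = b"
    have "\<not> ?Q' \<subseteq> {a}"
    proof
      assume "?Q' \<subseteq> {a}"
      then have "card ?Q' \<le> card {a}" by (intro card_mono) auto
      then show False using c2q by simp
    qed
    then obtain q where q: "q \<in> ?Q'" "q \<noteq> a" by blast
    show False using sa[OF q] sb[OF q(1)] q(2) ab by fastforce
  qed
  then show ?thesis using nba nbb by blast
qed

definition rr :: "real^2^'n \<Rightarrow> real^2^'n \<Rightarrow> 'n \<Rightarrow> 'n \<Rightarrow> real" where
  "rr p v i j = cross2 (p$j - p$i) (v$j - v$i) / ((p$j - p$i) \<bullet> (p$j - p$i))"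

definition sg :: "real^2^'n \<Rightarrow> 'n set \<Rightarrow> 'n \<Rightarrow> 'n \<Rightarrow> real" where
  "sg p Q i j = sgn (cross2 (p$j - p$i) (p$(SOME q. q \<in> Q - {i,j}) - p$i))"

definition TT :: "real^2^'n \<Rightarrow> real^2^'n \<Rightarrow> 'n set \<Rightarrow> 'n \<Rightarrow> real" where
  "TT p v Q i = (\<Sum>j\<in>Q. if nb p Q i j then sg p Q i j * rr p v i j else 0)"

lemma rr_sym: "rr p v i j = rr p v j i"
proof -
  have "cross2 (p$i - p$j) (v$i - v$j) = cross2 (p$j - p$i) (v$j - v$i)"
    by (simp add: cross2_def algebra_simps)
  moreover have "(p$i - p$j) \<bullet> (p$i - p$j) = (p$j - p$i) \<bullet> (p$j - p$i)"
  proof -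
    have e: "p$i - p$j = -(p$j - p$i)" by simp
    show ?thesis by (simp only: e inner_minus_left inner_minus_right minus_minus)
  qed
  ultimately show ?thesis by (simp add: rr_def)
qed

lemma diff_nonempty:
  assumes "finite Q" "3 \<le> card Q"
  shows "Q - {i,j} \<noteq> {}"
proof
  assume "Q - {i,j} = {}"
  then have "Q \<subseteq> {i,j}" by auto
  then have "card Q \<le> card {i,j}" by (intro card_mono) auto
  also have "\<dots> \<le> 2" by (simp add: card_insert_le_m1)
  finally show False using assms by simp
qed

lemma sg_val:
  assumes "nb p Q i j" "finite Q" "3 \<le> card Q" "q \<in> Q - {i,j}"
  shows "sg p Q i j = sgn (cross2 (p$j - p$i) (p$q - p$i))"
proof -
  define q0 where "q0 = (SOME q. q \<in> Q - {i,j})"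
  have ne: "Q - {i,j} \<noteq> {}" by (rule diff_nonempty[OF assms(2,3)])
  have q0: "q0 \<in> Q - {i,j}" unfolding q0_def by (rule someI_ex) (use ne in blast)
  show ?thesis using assms(1,4) q0 unfolding sg_def q0_def[symmetric] nb_def by auto
qed

lemma sg_anti:
  assumes "nb p Q i j" "finite Q" "3 \<le> card Q"
  shows "sg p Q j i = - sg p Q i j"
proof -
  have e: "Q - {j,i} = Q - {i,j}" by auto
  define q0 where "q0 = (SOME q. q \<in> Q - {i,j})"
  have "sg p Q j i = sgn (cross2 (p$i - p$j) (p$q0 - p$j))" unfolding sg_def e q0_def ..
  also have "\<dots> = - sgn (cross2 (p$j - p$i) (p$q0 - p$i))" by (simp add: cross_swap[of "p$i" "p$j" "p$q0"] sgn_minus)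
  also have "\<dots> = - sg p Q i j" unfolding sg_def q0_def ..
  finally show ?thesis .
qed

lemma TT_sum:
  assumes "finite Q" "3 \<le> card Q"
  shows "(\<Sum>i\<in>Q. TT p v Q i) = 0"
proof -
  define F where "F = (\<lambda>i j. if nb p Q i j then sg p Q i j * rr p v i j else 0)"
  have anti: "F j i = - F i j" for i j
  proof (cases "nb p Q i j")
    case True
    then have "nb p Q j i" by (rule nb_sym)
    then show ?thesis using True sg_anti[OF True assms] rr_sym[of p v i j] by (simp add: F_def)
  next
    case False
    then have "\<not> nb p Q j i" using nb_sym by blast
    then show ?thesis using False by (simp add: F_def)
  qed
  have "(\<Sum>i\<in>Q. \<Sum>j\<in>Q. F i j) = (\<Sum>j\<in>Q. \<Sum>i\<in>Q. F i j)" by (rule sum.swap)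
  also have "\<dots> = (\<Sum>j\<in>Q. \<Sum>i\<in>Q. - F j i)" by (intro sum.cong refl) (rule anti)
  also have "\<dots> = - (\<Sum>j\<in>Q. \<Sum>i\<in>Q. F j i)" by (simp add: sum_negf)
  finally have "(\<Sum>i\<in>Q. \<Sum>j\<in>Q. F i j) = 0" by simp
  then show ?thesis by (simp add: TT_def F_def)
qed

lemma key_alg:
  fixes A A' B B' :: "real^2"
  assumes "A \<bullet> A' = 0" "B \<bullet> B' = 0" "A \<noteq> 0" "B \<noteq> 0"
  shows "(A - B) \<bullet> (A' - B') = (cross2 B B' / (B \<bullet> B) - cross2 A A' / (A \<bullet> A)) * cross2 A B"
proof -
  define \<alpha> where "\<alpha> = cross2 A A' / (A \<bullet> A)"
  define \<beta> where "\<beta> = cross2 B B' / (B \<bullet> B)"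
  have a: "A' = \<alpha> *\<^sub>R rot A" using perp_rot[OF assms(1,3)] by (simp add: \<alpha>_def)
  have b: "B' = \<beta> *\<^sub>R rot B" using perp_rot[OF assms(2,4)] by (simp add: \<beta>_def)
  have "(A - B) \<bullet> (A' - B') = (\<beta> - \<alpha>) * cross2 A B"
    unfolding a b by (simp add: inner2 cross2_def algebra_simps)
  then show ?thesis by (simp add: \<alpha>_def \<beta>_def)
qed

lemma TT_local:
  assumes gp: "general_position p" and fin: "finite Q" and card: "3 \<le> card Q"
    and na: "nb p Q i a" and nbb: "nb p Q i b" and ab: "a \<noteq> b"
    and only: "\<forall>x. nb p Q i x \<longrightarrow> x = a \<or> x = b"
    and ta: "exv p v i a = 0" and tb: "exv p v i b = 0"
  shows "exv p v a b = - TT p v Q i * \<bar>cross2 (p$a - p$i) (p$b - p$i)\<bar>"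
proof -
  define F where "F = (\<lambda>j. if nb p Q i j then sg p Q i j * rr p v i j else 0)"
  have inQ: "a \<in> Q" "b \<in> Q" "i \<noteq> a" "i \<noteq> b" using na nbb unfolding nb_def by auto
  have "TT p v Q i = (\<Sum>j\<in>Q. F j)" by (simp add: TT_def F_def)
  also have "\<dots> = (\<Sum>j\<in>{a,b}. F j)"
    using fin inQ only by (intro sum.mono_neutral_right) (auto simp: F_def)
  also have "\<dots> = sg p Q i a * rr p v i a + sg p Q i b * rr p v i b"
    using ab na nbb by (simp add: F_def)
  finally have T: "TT p v Q i = sg p Q i a * rr p v i a + sg p Q i b * rr p v i b" .
  let ?A = "p$a - p$i" and ?B = "p$b - p$i" and ?A' = "v$a - v$i" and ?B' = "v$b - v$i"
  have sa: "sg p Q i a = sgn (cross2 ?A ?B)"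
    using sg_val[OF na fin card, of b] inQ ab by auto
  have sb: "sg p Q i b = sgn (cross2 ?B ?A)"
    using sg_val[OF nbb fin card, of a] inQ ab by auto
  have sb': "sgn (cross2 ?B ?A) = - sgn (cross2 ?A ?B)"
    using cross_antisym2[of ?B ?A] by (simp add: sgn_minus)
  have AA: "?A \<bullet> ?A' = 0" using ta unfolding exv_def
    by (metis inner_minus_left inner_minus_right minus_diff_eq minus_minus)
  have BB: "?B \<bullet> ?B' = 0" using tb unfolding exv_def
    by (metis inner_minus_left inner_minus_right minus_diff_eq minus_minus)
  have Anz: "?A \<noteq> 0" "?B \<noteq> 0"
    using gp inQ unfolding general_position_def inj_def by auto
  have "exv p v a b = (?A - ?B) \<bullet> (?A' - ?B')" by (simp add: exv_def)
  also have "\<dots> = (rr p v i b - rr p v i a) * cross2 ?A ?B"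
    using key_alg[OF AA BB Anz] by (simp add: rr_def)
  also have "\<dots> = - TT p v Q i * \<bar>cross2 ?A ?B\<bar>"
  proof -
    define X where "X = cross2 ?A ?B"
    have h: "sgn X * \<bar>X\<bar> = X" by (rule sgn_mult_abs)
    have "- (sgn X * rr p v i a + - sgn X * rr p v i b) * \<bar>X\<bar> = (rr p v i b - rr p v i a) * (sgn X * \<bar>X\<bar>)"
      by (simp add: algebra_simps)
    then show ?thesis unfolding T sa sb sb' X_def[symmetric] h by simp
  qed
  finally show ?thesis .
qed


definition cpos :: "real^2^'n \<Rightarrow> 'n set \<Rightarrow> bool" where
  "cpos p Q \<longleftrightarrow> (\<forall>q\<in>Q. p$q \<notin> convex hull ((\<lambda>k. p$k) ` (Q - {q})))"

lemma cpos_sub: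
  assumes "cpos p Q" "Q' \<subseteq> Q"
  shows "cpos p Q'"
  unfolding cpos_def
proof
  fix q assume q: "q \<in> Q'"
  have "convex hull ((\<lambda>k. p$k) ` (Q' - {q})) \<subseteq> convex hull ((\<lambda>k. p$k) ` (Q - {q}))"
    using assms(2) by (intro hull_mono image_mono) auto
  then show "p$q \<notin> convex hull ((\<lambda>k. p$k) ` (Q' - {q}))"
    using assms q unfolding cpos_def by blast
qed

lemma rot_zero [simp]: "rot 0 = 0" by (simp add: vec2_eq)

lemma rigid_ext:
  fixes p v :: "real^2^'n"
  assumes "exv p v a b = 0" "exv p v a q = 0" "exv p v b q = 0" "exv p v a i = 0" "exv p v b i = 0"
    "cross2 (p$b - p$a) (p$q - p$a) \<noteq> 0" "cross2 (p$b - p$a) (p$i - p$a) \<noteq> 0"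
  shows "exv p v i q = 0"
proof -
  define \<omega> where "\<omega> = cross2 (p$b - p$a) (v$b - v$a) / ((p$b - p$a) \<bullet> (p$b - p$a))"
  have q: "v$q = v$a + \<omega> *\<^sub>R rot (p$q - p$a)"
    using fit0[of "p$a" "p$b" "v$a" "v$b" "p$q" "v$q"] assms(1,2,3,6) unfolding exv_def \<omega>_def by blast
  have i: "v$i = v$a + \<omega> *\<^sub>R rot (p$i - p$a)"
    using fit0[of "p$a" "p$b" "v$a" "v$b" "p$i" "v$i"] assms(1,4,5,7) unfolding exv_def \<omega>_def by blast
  have "v$i - v$q = \<omega> *\<^sub>R rot (p$i - p$q)"
    unfolding q i by (simp add: rot_diff algebra_simps)
  then show ?thesis unfolding exv_def by simp
qed

lemma nb_only:
  assumes "nb p Q x a" "nb p Q x b" "a \<noteq> b"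
  shows "\<forall>y. nb p Q x y \<longrightarrow> y = a \<or> y = b"
proof (intro allI impI)
  fix y assume y: "nb p Q x y"
  show "y = a \<or> y = b"
  proof (rule ccontr)
    assume "\<not> (y = a \<or> y = b)"
    then have "distinct [a,b,y]" using assms(3) by auto
    then show False using nb_three[OF assms(1) assms(2) y] by blast
  qed
qed

lemma polyQ_base:
  fixes p v :: "real^2^'n"
  assumes gp: "general_position p" and fin: "finite Q" and card3: "card Q = 3"
    and tight: "\<forall>i j. nb p Q i j \<longrightarrow> exv p v i j = 0"
  shows "\<forall>i\<in>Q. \<forall>j\<in>Q. exv p v i j = 0"
proof (intro ballI)
  fix i j assume i: "i \<in> Q" and j: "j \<in> Q"
  show "exv p v i j = 0"
  proof (cases "i = j")
    case True then show ?thesis by simp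
  next
    case False
    have "card (Q - {i,j}) = card Q - card {i,j}" using i j fin by (intro card_Diff_subset) auto
    then have "card (Q - {i,j}) = 1" using card3 False by simp
    then obtain q where qq: "Q - {i,j} = {q}" by (rule card_1_singletonE)
    then have q: "q \<in> Q" "q \<noteq> i" "q \<noteq> j" by auto
    have "distinct [i,j,q]" using q False by simp
    then have cr: "cross2 (p$j - p$i) (p$q - p$i) \<noteq> 0" using gp_cross[OF gp] by blast
    have "nb p Q i j" unfolding nb_def qq using i j False cr by auto
    then show ?thesis using tight by blast
  qed
qed

lemma polyQ_TTle:
  fixes p v :: "real^2^'n"
  assumes gp: "general_position p" and ex: "\<forall>i j. 0 \<le> exv p v i j"
    and fin: "finite Q" and card: "3 \<le> card Q"
    and tight: "\<forall>i j. nb p Q i j \<longrightarrow> exv p v i j = 0"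
    and ab: "a \<noteq> b" "nb p Q x a" "nb p Q x b"
  shows "TT p v Q x \<le> 0"
proof -
  have only: "\<forall>y. nb p Q x y \<longrightarrow> y = a \<or> y = b" by (rule nb_only[OF ab(2,3,1)])
  have ta: "exv p v x a = 0" "exv p v x b = 0" using tight ab by blast+
  have e: "exv p v a b = - TT p v Q x * \<bar>cross2 (p$a - p$x) (p$b - p$x)\<bar>"
    by (rule TT_local[OF gp fin card ab(2) ab(3) ab(1) only ta])
  have "x \<noteq> a" "x \<noteq> b" using ab unfolding nb_def by auto
  then have "distinct [x,a,b]" using ab(1) by simp
  then have ne: "cross2 (p$a - p$x) (p$b - p$x) \<noteq> 0" using gp_cross[OF gp] by blast
  have "0 \<le> exv p v a b" using ex by blast
  then have le: "TT p v Q x * \<bar>cross2 (p$a - p$x) (p$b - p$x)\<bar> \<le> 0" using e by simp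
  have k: "0 < \<bar>cross2 (p$a - p$x) (p$b - p$x)\<bar>" using ne by simp
  show ?thesis
  proof (rule ccontr)
    assume "\<not> TT p v Q x \<le> 0"
    then have "0 < TT p v Q x" by simp
    then have "0 < TT p v Q x * \<bar>cross2 (p$a - p$x) (p$b - p$x)\<bar>" using k by simp
    then show False using le by simp
  qed
qed


lemma polyQ_step:
  fixes p v :: "real^2^'n"
  assumes gp: "general_position p" and ex: "\<forall>i j. 0 \<le> exv p v i j"
    and fin: "finite Q" and card: "3 \<le> card Q" and False: "card Q \<noteq> 3" and cp: "cpos p Q"
    and tight: "\<forall>i j. nb p Q i j \<longrightarrow> exv p v i j = 0"
    and IH0: "\<And>Q'. card Q' < card Q \<Longrightarrow> finite Q' \<Longrightarrow> 3 \<le> card Q' \<Longrightarrow> cpos p Q' \<Longrightarrow>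
       (\<forall>i j. nb p Q' i j \<longrightarrow> exv p v i j = 0) \<Longrightarrow> \<forall>x\<in>Q'. \<forall>y\<in>Q'. exv p v x y = 0"
  shows "\<forall>i\<in>Q. \<forall>j\<in>Q. exv p v i j = 0"
proof -
  have nbex: "\<exists>a b. a \<noteq> b \<and> nb p Q x a \<and> nb p Q x b" if "x \<in> Q" for x
    using nb_exists[OF gp fin that card bspec[OF cp[unfolded cpos_def] that]] .
  have TTle: "TT p v Q x \<le> 0" if x: "x \<in> Q" for x
  proof -
    obtain a b where ab: "a \<noteq> b" "nb p Q x a" "nb p Q x b" using nbex[OF x] by blast
    show ?thesis by (rule polyQ_TTle[OF gp ex fin card tight ab])
  qed
  have sum0: "(\<Sum>x\<in>Q. TT p v Q x) = 0" by (rule TT_sum[OF fin card])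
  have allz: "\<forall>x\<in>Q. TT p v Q x = 0"
  proof -
    have h1: "\<And>x. x \<in> Q \<Longrightarrow> 0 \<le> - TT p v Q x" using TTle by simp
    have h2: "(\<Sum>x\<in>Q. - TT p v Q x) = 0" using sum0 by (simp add: sum_negf)
    have "\<forall>x\<in>Q. - TT p v Q x = 0" using sum_nonneg_eq_0_iff[OF fin h1] h2 by (rule iffD1)
    then show ?thesis by simp
  qed
  have "Q \<noteq> {}" using card by auto
  then obtain i where i: "i \<in> Q" by blast
  obtain a b where ab: "a \<noteq> b" "nb p Q i a" "nb p Q i b" using nbex[OF i] by blast
  have onlyi: "\<forall>y. nb p Q i y \<longrightarrow> y = a \<or> y = b" by (rule nb_only[OF ab(2,3,1)])
  have ti: "exv p v i a = 0" "exv p v i b = 0" using tight ab by blast+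
  have exab: "exv p v a b = 0"
    using TT_local[OF gp fin card ab(2) ab(3) ab(1) onlyi ti] allz i by simp
  define Q' where "Q' = Q - {i}"
  have finQ': "finite Q'" using fin by (simp add: Q'_def)
  have cQ': "card Q' = card Q - 1" using fin i by (simp add: Q'_def)
  have lt: "card Q' < card Q" using cQ' card by simp
  have c3: "3 \<le> card Q'" using cQ' card False by simp
  have cpQ': "cpos p Q'" by (rule cpos_sub[OF cp]) (auto simp: Q'_def)
  have abi: "a \<noteq> i" "b \<noteq> i" "a \<in> Q" "b \<in> Q" using ab unfolding nb_def by auto
  have aQ': "a \<in> Q'" "b \<in> Q'" using abi by (auto simp: Q'_def)
  have key: "x \<in> {a,b}" if nxy: "nb p Q' x y" and nQ: "\<not> nb p Q x y" for x y
  proof (rule ccontr)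
    assume xab: "x \<notin> {a,b}"
    have xQ': "x \<in> Q'" "y \<in> Q'" "x \<noteq> y" using nxy unfolding nb_def by auto
    then have xQ: "x \<in> Q" "x \<noteq> i" by (auto simp: Q'_def)
    obtain n1 n2 where n: "n1 \<noteq> n2" "nb p Q x n1" "nb p Q x n2" using nbex[OF xQ(1)] by blast
    have ni: "n \<noteq> i" if "nb p Q x n" for n
    proof
      assume "n = i"
      then have "nb p Q i x" using nb_sym that by blast
      then show False using onlyi xab by auto
    qed
    have nQ': "n1 \<in> Q'" "n2 \<in> Q'"
      using n ni unfolding nb_def by (auto simp: Q'_def)
    have sub: "Q' \<subseteq> Q" by (auto simp: Q'_def)
    have "nb p Q' x n1" "nb p Q' x n2"
      using nb_sub[OF n(2) sub xQ'(1) nQ'(1)] nb_sub[OF n(3) sub xQ'(1) nQ'(2)] by auto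
    moreover have "y \<noteq> n1" "y \<noteq> n2" using nQ n by auto
    then have "distinct [n1,n2,y]" using n(1) by simp
    ultimately show False using nb_three[of p Q' x n1 n2 y] nxy by blast
  qed
  have tight': "\<forall>j k. nb p Q' j k \<longrightarrow> exv p v j k = 0"
  proof (intro allI impI)
    fix j k assume njk: "nb p Q' j k"
    show "exv p v j k = 0"
    proof (cases "nb p Q j k")
      case True then show ?thesis using tight by blast
    next
      case False
      have nkj: "\<not> nb p Q k j" using False nb_sym by blast
      have "j \<in> {a,b}" using key[OF njk False] .
      moreover have "k \<in> {a,b}" using key[OF nb_sym[OF njk] nkj] .
      moreover have "j \<noteq> k" using njk unfolding nb_def by auto
      ultimately show ?thesis using exab exv_sym[of p v a b] by auto
    qed
  qed
  have IH: "\<forall>x\<in>Q'. \<forall>y\<in>Q'. exv p v x y = 0"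
    using IH0[OF lt finQ' c3 cpQ' tight'] .
  have iq: "exv p v i q = 0" if q: "q \<in> Q'" for q
  proof (cases "q = a \<or> q = b")
    case True then show ?thesis using ti by auto
  next
    case False
    have qi: "q \<noteq> i" using q by (simp add: Q'_def)
    have d1: "distinct [a,b,q]" using False ab(1) by auto
    have d2: "distinct [a,b,i]" using abi ab(1) by auto
    show ?thesis
    proof (rule rigid_ext)
      show "exv p v a b = 0" "exv p v a q = 0" "exv p v b q = 0"
        using IH aQ' q by auto
      show "exv p v a i = 0" "exv p v b i = 0"
        using ti exv_sym[of p v a i] exv_sym[of p v b i] by auto
      show "cross2 (p$b - p$a) (p$q - p$a) \<noteq> 0" using gp_cross[OF gp d1] .
      show "cross2 (p$b - p$a) (p$i - p$a) \<noteq> 0" using gp_cross[OF gp d2] .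
    qed
  qed
  show ?thesis
  proof (intro ballI)
    fix x y assume x: "x \<in> Q" and y: "y \<in> Q"
    show "exv p v x y = 0"
    proof (cases "x = i")
      case True
      show ?thesis
      proof (cases "y = i")
        case True then show ?thesis using \<open>x = i\<close> by simp
      next
        case False then have "y \<in> Q'" using y by (simp add: Q'_def)
        then show ?thesis using iq \<open>x = i\<close> by simp
      qed
    next
      case False
      then have xQ': "x \<in> Q'" using x by (simp add: Q'_def)
      show ?thesis
      proof (cases "y = i")
        case True then show ?thesis using iq[OF xQ'] exv_sym[of p v x y] by simp
      next
        case False then have "y \<in> Q'" using y by (simp add: Q'_def)
        then show ?thesis using IH xQ' by blast
      qed
    qed
  qed
qed

lemma polyQ:
  fixes p v :: "real^2^'n"
  assumes gp: "general_position p" and ex: "\<forall>i j. 0 \<le> exv p v i j"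
  shows "finite Q \<Longrightarrow> 3 \<le> card Q \<Longrightarrow> cpos p Q \<Longrightarrow> (\<forall>i j. nb p Q i j \<longrightarrow> exv p v i j = 0)
     \<Longrightarrow> \<forall>i\<in>Q. \<forall>j\<in>Q. exv p v i j = 0"
proof (induction "card Q" arbitrary: Q rule: less_induct)
  case less
  show ?case
  proof (cases "card Q = 3")
    case True
    show ?thesis by (rule polyQ_base[OF gp less.prems(1) True less.prems(4)])
  next
    case False
    show ?thesis by (rule polyQ_step[OF gp ex less.prems(1) less.prems(2) False less.prems(3) less.prems(4) less.hyps])
  qed
qed


lemma tight_iff: "{i,j} \<in> tight_edges p v \<longleftrightarrow> i \<noteq> j \<and> exv p v i j = 0"
proof
  assume "{i,j} \<in> tight_edges p v"
  then obtain i' j' where h: "{i,j} = {i',j'}" "i' \<noteq> j'" "(p$i' - p$j') \<bullet> (v$i' - v$j') = 0"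
    unfolding tight_edges_def by blast
  then have "(i = i' \<and> j = j') \<or> (i = j' \<and> j = i')" by (simp add: doubleton_eq_iff)
  then show "i \<noteq> j \<and> exv p v i j = 0"
    using h exv_sym[of p v i' j'] unfolding exv_def by auto
next
  assume "i \<noteq> j \<and> exv p v i j = 0"
  then show "{i,j} \<in> tight_edges p v" unfolding tight_edges_def exv_def by blast
qed

lemma cross_rot: "cross2 d y = rot d \<bullet> y"
  by (simp add: cross2_def inner2 algebra_simps)

lemma nb_frontier:
  fixes p :: "real^2^'n"
  assumes gp: "general_position p" and fin: "finite Q" and n: "nb p Q i j"
  shows "closed_segment (p$i) (p$j) \<subseteq> frontier (convex hull ((\<lambda>k. p$k) ` Q))"
proof -
  have ij: "i \<in> Q" "j \<in> Q" "i \<noteq> j" using n unfolding nb_def by auto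
  define d where "d = p$j - p$i"
  have dnz: "d \<noteq> 0" using gp ij unfolding general_position_def inj_def d_def by auto
  obtain \<sigma> :: real where sg: "\<sigma> \<noteq> 0" "\<forall>q\<in>Q-{i,j}. 0 < \<sigma> * cross2 d (p$q - p$i)"
  proof (cases "\<forall>q\<in>Q-{i,j}. 0 < cross2 d (p$q - p$i)")
    case True then show ?thesis using that[of 1] by simp
  next
    case False
    then have "\<forall>q\<in>Q-{i,j}. cross2 d (p$q - p$i) < 0" using n unfolding nb_def d_def by blast
    then show ?thesis using that[of "-1"] by simp
  qed
  define c where "c = \<sigma> *\<^sub>R rot d"
  have rnz: "rot d \<noteq> 0" using dnz by (auto simp: vec2_eq)
  have cnz: "c \<noteq> 0" using sg(1) rnz by (simp add: c_def)
  have cq: "c \<bullet> (p$q - p$i) = \<sigma> * cross2 d (p$q - p$i)" for q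
    by (simp add: c_def cross_rot)
  have cH: "c \<bullet> p$i \<le> c \<bullet> p$q" if "q \<in> Q" for q
  proof -
    have "0 \<le> \<sigma> * cross2 d (p$q - p$i)"
    proof (cases "q = i \<or> q = j")
      case True then show ?thesis by (auto simp: d_def cross2_def)
    next
      case False then show ?thesis using sg(2) that by (simp add: less_imp_le)
    qed
    then show ?thesis using cq[of q] by (simp add: inner_diff_right)
  qed
  let ?H = "{x. c \<bullet> x \<ge> c \<bullet> p$i}"
  have hullH: "convex hull ((\<lambda>k. p$k) ` Q) \<subseteq> ?H"
    by (rule hull_minimal) (use cH convex_halfspace_ge in auto)
  have segh: "closed_segment (p$i) (p$j) \<subseteq> convex hull ((\<lambda>k. p$k) ` Q)"
    by (rule closed_segment_subset_convex_hull) (use ij in \<open>auto intro: hull_inc\<close>)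
  have clo: "closure (convex hull ((\<lambda>k. p$k) ` Q)) = convex hull ((\<lambda>k. p$k) ` Q)"
    using fin by (simp add: closure_closed compact_imp_closed compact_convex_hull finite_imp_compact)
  have int: "interior (convex hull ((\<lambda>k. p$k) ` Q)) \<subseteq> {x. c \<bullet> x > c \<bullet> p$i}"
    using interior_mono[OF hullH] interior_halfspace_ge[OF cnz] by simp
  show ?thesis
  proof
    fix z assume z: "z \<in> closed_segment (p$i) (p$j)"
    then obtain u where zu: "z = (1 - u) *\<^sub>R p$i + u *\<^sub>R p$j" unfolding closed_segment_def by blast
    have "z - p$i = u *\<^sub>R d" by (simp add: zu d_def algebra_simps)
    then have "c \<bullet> (z - p$i) = u * (\<sigma> * cross2 d d)" by (simp add: c_def cross_rot)
    then have "c \<bullet> z = c \<bullet> p$i" by (simp add: cross2_def inner_diff_right)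
    then have "z \<notin> interior (convex hull ((\<lambda>k. p$k) ` Q))" using int by auto
    moreover have "z \<in> closure (convex hull ((\<lambda>k. p$k) ` Q))" using clo segh z by auto
    ultimately show "z \<in> frontier (convex hull ((\<lambda>k. p$k) ` Q))" by (simp add: frontier_def)
  qed
qed

lemma sum_single:
  fixes f :: "'a \<Rightarrow> 'b::comm_monoid_add"
  assumes "finite Q" "q1 \<in> Q" "\<forall>q\<in>Q. q \<noteq> q1 \<longrightarrow> f q = 0"
  shows "sum f Q = f q1"
proof -
  have "sum f Q = f q1 + sum f (Q - {q1})" using assms(1,2) by (rule sum.remove)
  moreover have "sum f (Q - {q1}) = 0" using assms(3) by (intro sum.neutral) auto
  ultimately show ?thesis by simp
qed

lemma part_iii:
  fixes p v :: "real^2^'n"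
  assumes gp: "general_position p" and ex: "\<forall>i j. 0 \<le> exv p v i j"
    and cp: "convex_polygon p Q" and bd: "polygon_boundary_edges p Q \<subseteq> tight_edges p v"
  shows "\<forall>m m'. p$m \<in> convex hull ((\<lambda>i. p$i) ` Q) \<longrightarrow> p$m' \<in> convex hull ((\<lambda>i. p$i) ` Q)
     \<longrightarrow> exv p v m m' = 0"
proof -
  have fin: "finite Q" by simp
  have card: "3 \<le> card Q" using cp by (simp add: convex_polygon_def)
  have injp: "inj (\<lambda>k. p$k)" using gp by (simp add: general_position_def)
  have cpo: "cpos p Q"
    unfolding cpos_def
  proof
    fix q assume q: "q \<in> Q"
    let ?C = "convex hull ((\<lambda>i. p$i) ` Q)"
    have "p$q extreme_point_of ?C" using cp q by (simp add: convex_polygon_def)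
    then have cv: "convex (?C - {p$q})" using extreme_point_of_stillconvex[of ?C] by simp
    have "(\<lambda>k. p$k) ` (Q - {q}) \<subseteq> ?C - {p$q}"
      using injp by (auto intro: hull_inc simp: inj_def)
    then have "convex hull ((\<lambda>k. p$k) ` (Q - {q})) \<subseteq> ?C - {p$q}"
      using cv by (intro hull_minimal) auto
    then show "p$q \<notin> convex hull ((\<lambda>k. p$k) ` (Q - {q}))" by blast
  qed
  have tight: "\<forall>i j. nb p Q i j \<longrightarrow> exv p v i j = 0"
  proof (intro allI impI)
    fix i j assume n: "nb p Q i j"
    have ij: "i \<in> Q" "j \<in> Q" "i \<noteq> j" using n unfolding nb_def by auto
    have P: "i \<in> Q \<and> j \<in> Q \<and> i \<noteq> j \<and> closed_segment (p$i) (p$j) \<subseteq> frontier (convex hull ((\<lambda>k. p$k) ` Q))"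
      by (intro conjI ij(1) ij(2) ij(3) nb_frontier[OF gp fin n])
    have "\<exists>i' j'. {i,j} = {i',j'} \<and> i' \<in> Q \<and> j' \<in> Q \<and> i' \<noteq> j' \<and>
        closed_segment (p$i') (p$j') \<subseteq> frontier (convex hull ((\<lambda>k. p$k) ` Q))"
      by (rule exI[of _ i], rule exI[of _ j]) (use P in simp)
    then have "{i,j} \<in> polygon_boundary_edges p Q"
      unfolding polygon_boundary_edges_def by (simp only: mem_Collect_eq)
    then have "{i,j} \<in> tight_edges p v" using bd by blast
    then show "exv p v i j = 0" by (simp add: tight_iff)
  qed
  have allQ: "\<forall>i\<in>Q. \<forall>j\<in>Q. exv p v i j = 0" using polyQ[OF gp ex fin card cpo tight] .
  have "\<exists>a b. a \<in> Q \<and> b \<in> Q \<and> a \<noteq> b"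
  proof -
    have "Q \<noteq> {}" using card by auto
    then obtain a where a: "a \<in> Q" by blast
    have "\<not> Q \<subseteq> {a}"
    proof
      assume "Q \<subseteq> {a}" then have "card Q \<le> card {a}" by (intro card_mono) auto
      then show False using card by simp
    qed
    then show ?thesis using a by blast
  qed
  then obtain a b where ab: "a \<in> Q" "b \<in> Q" "a \<noteq> b" by blast
  define \<omega> where "\<omega> = cross2 (p$b - p$a) (v$b - v$a) / ((p$b - p$a) \<bullet> (p$b - p$a))"
  define T where "T = (\<lambda>x. v$a + \<omega> *\<^sub>R rot (x - p$a))"
  have Tdiff: "T x - T y = \<omega> *\<^sub>R rot (x - y)" for x y by (simp add: T_def rot_diff algebra_simps)
  have vQ: "v$q = T (p$q)" if q: "q \<in> Q" for q
  proof -
    consider "q = a" | "q = b" | "q \<noteq> a" "q \<noteq> b" by blast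
    then show ?thesis
    proof cases
      case 1 then show ?thesis by (simp add: T_def)
    next
      case 2
      have "(p$b - p$a) \<bullet> (v$b - v$a) = 0" using allQ ab unfolding exv_def by blast
      moreover have "p$b - p$a \<noteq> 0" using injp ab by (auto simp: inj_def)
      ultimately have "v$b - v$a = \<omega> *\<^sub>R rot (p$b - p$a)" using perp_rot \<omega>_def by blast
      then show ?thesis using 2 by (simp add: T_def algebra_simps)
    next
      case 3
      have "distinct [a,b,q]" using 3 ab by auto
      then have cr: "cross2 (p$b - p$a) (p$q - p$a) \<noteq> 0" using gp_cross[OF gp] by blast
      have "v$q = v$a + \<omega> *\<^sub>R rot (p$q - p$a)"
        using fit0[of "p$a" "p$b" "v$a" "v$b" "p$q" "v$q"] allQ ab q cr unfolding exv_def \<omega>_def by blast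
      then show ?thesis by (simp add: T_def)
    qed
  qed
  have vH: "v$m = T (p$m)" if m: "p$m \<in> convex hull ((\<lambda>i. p$i) ` Q)" for m
  proof (cases "m \<in> Q")
    case True then show ?thesis using vQ by blast
  next
    case mQ: False
    define w where "w = v$m - T (p$m)"
    have g: "exv p v m q = (p$m - p$q) \<bullet> w" if "q \<in> Q" for q
    proof -
      have "v$m - v$q = w + \<omega> *\<^sub>R rot (p$m - p$q)"
        using vQ[OF that] Tdiff[of "p$m" "p$q"] by (simp add: w_def algebra_simps)
      then show ?thesis unfolding exv_def by (simp add: inner_add_right)
    qed
    have gnn: "0 \<le> (p$m - p$q) \<bullet> w" if "q \<in> Q" for q
    proof -
      have "0 \<le> exv p v m q" using ex by blast
      then show ?thesis using g[OF that] by simp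
    qed
    have "p$m \<in> {y. \<exists>u. (\<forall>x\<in>(\<lambda>i. p$i) ` Q. 0 \<le> u x) \<and> sum u ((\<lambda>i. p$i) ` Q) = 1 \<and>
        (\<Sum>x\<in>(\<lambda>i. p$i) ` Q. u x *\<^sub>R x) = y}"
      using m convex_hull_finite[OF finite_imageI[OF fin, of "\<lambda>i. p$i"]] by simp
    then obtain \<mu> where mu: "\<forall>y\<in>(\<lambda>i. p$i) ` Q. 0 \<le> \<mu> y" "sum \<mu> ((\<lambda>i. p$i) ` Q) = 1"
      "(\<Sum>y\<in>(\<lambda>i. p$i) ` Q. \<mu> y *\<^sub>R y) = p$m"
      by (simp only: mem_Collect_eq) blast
    have injQ: "inj_on (\<lambda>i. p$i) Q" using injp by (simp add: inj_on_def inj_def)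
    define \<mu>' where "\<mu>' = (\<lambda>q. \<mu> (p$q))"
    have m1: "\<forall>q\<in>Q. 0 \<le> \<mu>' q" using mu(1) by (simp add: \<mu>'_def)
    have m2: "(\<Sum>q\<in>Q. \<mu>' q) = 1" using mu(2) sum.reindex[OF injQ, of \<mu>] by (simp add: \<mu>'_def o_def)
    have m3: "(\<Sum>q\<in>Q. \<mu>' q *\<^sub>R p$q) = p$m"
      using mu(3) sum.reindex[OF injQ, of "\<lambda>y. \<mu> y *\<^sub>R y"] by (simp add: \<mu>'_def o_def)
    have s0: "(\<Sum>q\<in>Q. \<mu>' q * ((p$m - p$q) \<bullet> w)) = 0"
    proof -
      have "(\<Sum>q\<in>Q. \<mu>' q * ((p$m - p$q) \<bullet> w)) = (\<Sum>q\<in>Q. \<mu>' q) * (p$m \<bullet> w) - (\<Sum>q\<in>Q. \<mu>' q *\<^sub>R p$q) \<bullet> w"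
        by (simp add: inner_diff_left algebra_simps sum_subtractf sum_distrib_right inner_sum_left)
      then show ?thesis using m2 m3 by simp
    qed
    have hn: "\<And>q. q \<in> Q \<Longrightarrow> 0 \<le> \<mu>' q * ((p$m - p$q) \<bullet> w)"
      using m1 gnn by (simp add: mult_nonneg_nonneg)
    have each: "\<forall>q\<in>Q. \<mu>' q * ((p$m - p$q) \<bullet> w) = 0"
      using sum_nonneg_eq_0_iff[OF fin hn] s0 by (rule iffD1)
    show ?thesis
    proof (rule ccontr)
      assume "v$m \<noteq> T (p$m)"
      then have wnz: "w \<noteq> 0" by (simp add: w_def)
      have "\<exists>q1\<in>Q. 0 < \<mu>' q1"
      proof (rule ccontr)
        assume "\<not> (\<exists>q1\<in>Q. 0 < \<mu>' q1)"
        then have "\<forall>q\<in>Q. \<mu>' q = 0" using m1 by force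
        then have "(\<Sum>q\<in>Q. \<mu>' q) = 0" by simp
        then show False using m2 by simp
      qed
      then obtain q1 where q1: "q1 \<in> Q" "0 < \<mu>' q1" by blast
      have "\<mu>' q1 * ((p$m - p$q1) \<bullet> w) = 0" using each q1(1) by blast
      then have z1: "(p$m - p$q1) \<bullet> w = 0" using q1(2) by simp
      have others: "\<forall>q\<in>Q. q \<noteq> q1 \<longrightarrow> \<mu>' q = 0"
      proof (intro ballI impI)
        fix q assume q: "q \<in> Q" "q \<noteq> q1"
        show "\<mu>' q = 0"
        proof (rule ccontr)
          assume "\<mu>' q \<noteq> 0"
          moreover have "\<mu>' q * ((p$m - p$q) \<bullet> w) = 0" using each q(1) by blast
          ultimately have z2: "(p$m - p$q) \<bullet> w = 0" by simp
          have "cross2 (p$m - p$q1) (p$m - p$q) = 0"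
            using perp_cross[OF wnz] z1 z2 by (simp add: inner_commute)
          moreover have "distinct [m, q1, q]" using q q1 mQ by auto
          then have "cross2 (p$q1 - p$m) (p$q - p$m) \<noteq> 0" using gp_cross[OF gp] by blast
          moreover have "cross2 (p$m - p$q1) (p$m - p$q) = cross2 (p$q1 - p$m) (p$q - p$m)"
            by (simp add: cross2_def algebra_simps)
          ultimately show False by simp
        qed
      qed
      have "(\<Sum>q\<in>Q. \<mu>' q) = \<mu>' q1" by (rule sum_single[OF fin q1(1) others])
      then have one: "\<mu>' q1 = 1" using m2 by simp
      have "(\<Sum>q\<in>Q. \<mu>' q *\<^sub>R p$q) = \<mu>' q1 *\<^sub>R p$q1"
        by (rule sum_single[OF fin q1(1)]) (use others in simp)
      then have "p$m = p$q1" using m3 one by simp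
      then have "m = q1" using injp by (simp add: inj_def)
      then show False using mQ q1 by simp
    qed
  qed
  show ?thesis
  proof (intro allI impI)
    fix m m' assume m: "p$m \<in> convex hull ((\<lambda>i. p$i) ` Q)" and m': "p$m' \<in> convex hull ((\<lambda>i. p$i) ` Q)"
    have "v$m - v$m' = \<omega> *\<^sub>R rot (p$m - p$m')" using vH[OF m] vH[OF m'] Tdiff by simp
    then show "exv p v m m' = 0" unfolding exv_def by simp
  qed
qed


definition ecomb :: "real^2^'n \<Rightarrow> 'n \<Rightarrow> 'n \<Rightarrow> real^2^'n" where
  "ecomb p i j = axis i (p$i - p$j) - axis j (p$i - p$j)"

lemma ecomb_inner: "ecomb p i j \<bullet> v = (p$i - p$j) \<bullet> (v$i - v$j)"
  by (simp add: ecomb_def inner_diff_left inner_axis' inner_diff_right)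

lemma coord_inner: "axis i (axis k (1::real)) \<bullet> (v::real^2^'n) = v$i$k"
  by (simp add: inner_axis')

lemma cone_eq: "expansion_cone p i1 i2 =
   {v. axis i1 (axis 1 1) \<bullet> v = 0} \<inter> {v. axis i1 (axis 2 1) \<bullet> v = 0} \<inter> {v. axis i2 (axis 1 1) \<bullet> v = 0}
   \<inter> \<Inter> ((\<lambda>(i,j). {v. ecomb p i j \<bullet> v \<ge> 0}) ` {(i,j). i \<noteq> j})"
  by (auto simp: expansion_cone_def normalized_def coord_inner ecomb_inner)

lemma exp_poly: "polyhedron (expansion_cone p i1 i2)"
proof -
  have "finite ((\<lambda>(i,j). {v. ecomb p i j \<bullet> v \<ge> 0}) ` {(i,j). i \<noteq> j})" by simp
  moreover have "\<forall>S\<in>(\<lambda>(i,j). {v. ecomb p i j \<bullet> v \<ge> 0}) ` {(i,j). i \<noteq> j}. polyhedron S"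
    by (auto simp: polyhedron_halfspace_ge)
  ultimately show ?thesis unfolding cone_eq
    by (intro polyhedron_Int polyhedron_Inter polyhedron_hyperplane) auto
qed

lemma exv_comb: "exv p (a *\<^sub>R x + b *\<^sub>R y) i j = a * exv p x i j + b * exv p y i j"
  by (simp add: exv_def inner_diff_right inner_add_right algebra_simps)

lemma exv_scale: "exv p (b *\<^sub>R y) i j = b * exv p y i j"
  by (simp add: exv_def inner_diff_right algebra_simps)

lemma exv_add: "exv p (x + y) i j = exv p x i j + exv p y i j"
  by (simp add: exv_def inner_diff_right inner_add_right algebra_simps)

lemma cone_exv: "v \<in> expansion_cone p i1 i2 \<Longrightarrow> 0 \<le> exv p v i j"
  by (cases "i = j") (auto simp: expansion_cone_def exv_def)

lemma exp_cone: "cone (expansion_cone p i1 i2)"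
  unfolding cone_def
proof (intro ballI allI impI)
  fix v and c :: real
  assume v: "v \<in> expansion_cone p i1 i2" and c: "0 \<le> c"
  have n: "normalized i1 i2 (c *\<^sub>R v)" using v by (simp add: expansion_cone_def normalized_def)
  have "0 \<le> exv p (c *\<^sub>R v) i j" for i j
    using cone_exv[OF v, of i j] c exv_scale[of p c v i j] by simp
  then have "\<forall>i j. i \<noteq> j \<longrightarrow> (p$i - p$j) \<bullet> ((c *\<^sub>R v)$i - (c *\<^sub>R v)$j) \<ge> 0"
    unfolding exv_def by blast
  then show "c *\<^sub>R v \<in> expansion_cone p i1 i2" using n unfolding expansion_cone_def by blast
qed

lemma rigid0:
  fixes p w :: "real^2^'n"
  assumes gp: "general_position p" and ne: "i1 \<noteq> i2" and y: "(p$i1)$2 \<noteq> (p$i2)$2"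
    and nw: "normalized i1 i2 w" and z: "\<forall>i j. exv p w i j = 0"
  shows "w = 0"
proof -
  have w1: "w$i1 = 0" using nw by (simp add: normalized_def vec2_eq)
  have w2: "w$i2 = 0"
  proof -
    have "exv p w i2 i1 = 0" using z by blast
    then have "(p$i2 - p$i1) \<bullet> w$i2 = 0" using w1 by (simp add: exv_def)
    then have "(p$i2 - p$i1)$2 * (w$i2)$2 = 0" using nw by (simp add: inner2 normalized_def)
    then have "(w$i2)$2 = 0" using y by simp
    then show ?thesis using nw by (simp add: vec2_eq normalized_def)
  qed
  have wk: "w$k = 0" if k: "k \<noteq> i1" "k \<noteq> i2" for k
  proof -
    have a: "(p$k - p$i1) \<bullet> w$k = 0" using z w1 by (metis exv_def diff_zero)
    have b: "(p$k - p$i2) \<bullet> w$k = 0" using z w2 by (metis exv_def diff_zero)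
    have "distinct [k,i1,i2]" using k ne by simp
    then have "cross2 (p$i1 - p$k) (p$i2 - p$k) \<noteq> 0" using gp_cross[OF gp] by blast
    moreover have "cross2 (p$k - p$i1) (p$k - p$i2) = cross2 (p$i1 - p$k) (p$i2 - p$k)"
      by (simp add: cross2_def algebra_simps)
    ultimately have "cross2 (p$k - p$i1) (p$k - p$i2) \<noteq> 0" by simp
    then show ?thesis using perp2[OF a b] by blast
  qed
  show ?thesis
    unfolding vec_eq_iff using w1 w2 wk by (metis zero_index)
qed

lemma zero_extreme:
  fixes p :: "real^2^'n"
  assumes gp: "general_position p" and ne: "i1 \<noteq> i2" and y: "(p$i1)$2 \<noteq> (p$i2)$2"
  shows "0 extreme_point_of (expansion_cone p i1 i2)"
  unfolding extreme_point_of_def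
proof (intro conjI ballI)
  show "0 \<in> expansion_cone p i1 i2" by (simp add: expansion_cone_def normalized_def)
next
  fix a b assume a: "a \<in> expansion_cone p i1 i2" and b: "b \<in> expansion_cone p i1 i2"
  show "0 \<notin> open_segment a b"
  proof
    assume "0 \<in> open_segment a b"
    then have a0: "a \<noteq> 0" and "0 \<in> closed_segment a b" by (auto simp: open_segment_def)
    then obtain u where u: "0 \<le> u" "u \<le> 1" "0 = (1 - u) *\<^sub>R a + u *\<^sub>R b"
      unfolding closed_segment_def by blast
    have b0: "b \<noteq> 0" using \<open>0 \<in> open_segment a b\<close> by (auto simp: open_segment_def)
    have u1: "u \<noteq> 1" using u b0 by auto
    have "\<forall>i j. exv p a i j = 0"
    proof (intro allI)
      fix i j
      have "0 = (1 - u) * exv p a i j + u * exv p b i j"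
        using exv_comb[of p "1 - u" a u b i j] u(3) by (simp add: exv_def)
      moreover have "0 \<le> exv p a i j" "0 \<le> exv p b i j" using a b cone_exv by blast+
      moreover have "0 < 1 - u" using u u1 by simp
      ultimately show "exv p a i j = 0"
        by (metis add_nonneg_eq_0_iff mult_nonneg_nonneg u(1) less_imp_le mult_eq_0_iff
            order_less_irrefl)
    qed
    moreover have "normalized i1 i2 a" using a by (simp add: expansion_cone_def)
    ultimately have "a = 0" using rigid0[OF gp ne y] by blast
    then show False using a0 by simp
  qed
qed


lemma normalized_subspace: "subspace {v. normalized i1 i2 (v::real^2^'n)}"
  by (auto simp: subspace_def normalized_def)

lemma basis_vec_cases:
  assumes "b \<in> (Basis :: (real^2^'n) set)"
  shows "\<exists>i k. b = axis i (axis k (1::real))"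
  using assms unfolding Basis_vec_def by auto

lemma dimL:
  assumes ne: "i1 \<noteq> i2"
  shows "dim {v. normalized i1 i2 (v::real^2^'n)} = 2 * CARD('n) - 3"
proof -
  define b1 :: "real^2^'n" where "b1 = axis i1 (axis 1 1)"
  define b2 :: "real^2^'n" where "b2 = axis i1 (axis 2 1)"
  define b3 :: "real^2^'n" where "b3 = axis i2 (axis 1 1)"
  define B where "B = (Basis :: (real^2^'n) set) - {b1,b2,b3}"
  have inB: "b1 \<in> Basis" "b2 \<in> Basis" "b3 \<in> Basis" by (simp_all add: b1_def b2_def b3_def)
  have d12: "(1::2) \<noteq> 2" by simp
  have dist: "b1 \<noteq> b2" "b1 \<noteq> b3" "b2 \<noteq> b3"
    using ne d12 by (auto simp: b1_def b2_def b3_def axis_eq_axis)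
  have cB: "card (Basis :: (real^2^'n) set) = 2 * CARD('n)" by simp
  have c3: "card {b1,b2,b3} = 3" using dist by simp
  have cardB: "card B = 2 * CARD('n) - 3"
    unfolding B_def using card_Diff_subset[of "{b1,b2,b3}" "Basis :: (real^2^'n) set"] inB cB c3 by simp
  have indB: "independent B" by (rule independent_mono[OF independent_Basis]) (auto simp: B_def)
  have L_eq: "{v. normalized i1 i2 (v::real^2^'n)} = span B"
  proof
    show "{v. normalized i1 i2 v} \<subseteq> span B"
    proof
      fix v :: "real^2^'n" assume v: "v \<in> {v. normalized i1 i2 v}"
      have z: "v \<bullet> b = 0" if "b \<in> {b1,b2,b3}" for b
        using that v by (auto simp: b1_def b2_def b3_def inner_commute[of v] coord_inner normalized_def)
      have "v = (\<Sum>b\<in>Basis. (v \<bullet> b) *\<^sub>R b)" by (simp add: euclidean_representation)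
      also have "\<dots> = (\<Sum>b\<in>B. (v \<bullet> b) *\<^sub>R b)"
        by (rule sum.mono_neutral_right) (use z in \<open>auto simp: B_def\<close>)
      also have "\<dots> \<in> span B" by (intro span_sum span_mul span_base)
      finally show "v \<in> span B" .
    qed
  next
    show "span B \<subseteq> {v. normalized i1 i2 v}"
    proof (rule span_minimal[OF _ normalized_subspace])
      show "B \<subseteq> {v. normalized i1 i2 v}"
      proof
        fix b assume b: "b \<in> B"
        then have bB: "b \<in> Basis" "b \<noteq> b1" "b \<noteq> b2" "b \<noteq> b3" by (auto simp: B_def)
        obtain i k where ik: "b = axis i (axis k (1::real))" using basis_vec_cases[OF bB(1)] by blast
        have k12: "k = 1 \<or> k = 2" using exhaust_2 by blast
        have h1: "\<not> (i = i1 \<and> k = 1)" using bB(2) ik by (auto simp: b1_def)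
        have h2: "\<not> (i = i1 \<and> k = 2)" using bB(3) ik by (auto simp: b2_def)
        have h3: "\<not> (i = i2 \<and> k = 1)" using bB(4) ik by (auto simp: b3_def)
        show "b \<in> {v. normalized i1 i2 v}"
          using h1 h2 h3 k12 d12 unfolding ik normalized_def by (auto simp: axis_def)
      qed
    qed
  qed
  show ?thesis unfolding L_eq using dim_span_eq_card_independent[OF indB] cardB by simp
qed

lemma aff_dim_cone:
  fixes p :: "real^2^'n"
  assumes gp: "general_position p" and ne: "i1 \<noteq> i2" and y: "(p$i1)$2 \<noteq> (p$i2)$2"
    and card3: "CARD('n) \<ge> 3"
  shows "aff_dim (expansion_cone p i1 i2) = 2 * int CARD('n) - 3"
proof -
  let ?S = "expansion_cone p i1 i2"
  let ?L = "{v. normalized i1 i2 (v::real^2^'n)}"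
  have injp: "inj (\<lambda>k. p$k)" using gp by (simp add: general_position_def)
  have d2: "(p$i2 - p$i1)$2 \<noteq> 0" using y by simp
  define c where "c = (p$i2 - p$i1)$1 / (p$i2 - p$i1)$2"
  define v0 :: "real^2^'n" where "v0 = (\<chi> k. (p$k - p$i1) + c *\<^sub>R rot (p$k - p$i1))"
  have v0d: "v0$i - v0$j = (p$i - p$j) + c *\<^sub>R rot (p$i - p$j)" for i j
    by (simp add: v0_def rot_diff algebra_simps)
  have exv0: "exv p v0 i j = (p$i - p$j) \<bullet> (p$i - p$j)" for i j
    by (simp add: exv_def v0d inner_add_right)
  have a1: "v0$i1 = 0" by (simp add: v0_def)
  have a2: "v0$i2$1 = (p$i2 - p$i1)$1 - c * (p$i2 - p$i1)$2" by (simp add: v0_def algebra_simps)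
  have a3: "c * (p$i2 - p$i1)$2 = (p$i2 - p$i1)$1"
  proof -
    define X where "X = (p$i2 - p$i1)$1"
    define Y where "Y = (p$i2 - p$i1)$2"
    have "Y \<noteq> 0" using d2 by (simp add: Y_def)
    then have "X / Y * Y = X" by simp
    then show ?thesis unfolding c_def X_def[symmetric] Y_def[symmetric] .
  qed
  have n0: "normalized i1 i2 v0" using a1 a2 a3 by (simp add: normalized_def)
  have D: "0 < (p$i - p$j) \<bullet> (p$i - p$j)" if "i \<noteq> j" for i j
    using injp that by (auto simp: inj_def)
  have v0S: "v0 \<in> ?S" using n0 exv0 unfolding expansion_cone_def exv_def by simp
  have aff: "aff_dim ?S = int (dim ((\<lambda>x. x - v0) ` ?S))"
    by (rule aff_dim_eq_dim_subtract) (rule hull_inc[OF v0S])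
  have span_eq: "span ((\<lambda>x. x - v0) ` ?S) = ?L"
  proof
    show "span ((\<lambda>x. x - v0) ` ?S) \<subseteq> ?L"
    proof (rule span_minimal[OF _ normalized_subspace])
      show "(\<lambda>x. x - v0) ` ?S \<subseteq> ?L"
        using n0 by (auto simp: expansion_cone_def normalized_def)
    qed
  next
    show "?L \<subseteq> span ((\<lambda>x. x - v0) ` ?S)"
    proof
      fix w :: "real^2^'n" assume w: "w \<in> ?L"
      define M where "M = (\<Sum>i\<in>UNIV. \<Sum>j\<in>UNIV. \<bar>exv p w i j\<bar> / ((p$i - p$j) \<bullet> (p$i - p$j)))"
      have M0: "0 \<le> M" unfolding M_def by (intro sum_nonneg) simp
      define \<epsilon> where "\<epsilon> = 1 / (1 + M)"
      have e0: "0 < \<epsilon>" using M0 by (simp add: \<epsilon>_def)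
      have inS: "v0 + \<epsilon> *\<^sub>R w \<in> ?S"
      proof -
        have nn: "normalized i1 i2 (v0 + \<epsilon> *\<^sub>R w)" using n0 w by (simp add: normalized_def)
        have "0 \<le> exv p (v0 + \<epsilon> *\<^sub>R w) i j" if ij: "i \<noteq> j" for i j
        proof -
          let ?D = "(p$i - p$j) \<bullet> (p$i - p$j)" and ?e = "exv p w i j"
          have Dp: "0 < ?D" using D[OF ij] .
          have "\<bar>?e\<bar> / ?D \<le> (\<Sum>j\<in>UNIV. \<bar>exv p w i j\<bar> / ((p$i - p$j) \<bullet> (p$i - p$j)))"
            by (rule member_le_sum) simp_all
          also have "\<dots> \<le> M" unfolding M_def
            by (rule member_le_sum[of i UNIV "\<lambda>i. \<Sum>j\<in>UNIV. \<bar>exv p w i j\<bar> / ((p$i - p$j) \<bullet> (p$i - p$j))"])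
               (simp_all add: sum_nonneg)
          finally have "\<bar>?e\<bar> \<le> M * ?D" using Dp by (simp add: pos_divide_le_eq)
          also have "\<dots> \<le> (1 + M) * ?D" using Dp by simp
          finally have c0: "\<bar>?e\<bar> \<le> (1 + M) * ?D" .
          have h1M: "0 < 1 + M" using M0 by simp
          have c1: "\<bar>?e\<bar> \<le> ?D * (1 + M)" using c0 by (simp only: mult.commute)
          have "\<bar>?e\<bar> / (1 + M) \<le> ?D" unfolding pos_divide_le_eq[OF h1M] by (rule c1)
          then have "\<epsilon> * \<bar>?e\<bar> \<le> ?D" by (simp add: \<epsilon>_def)
          moreover have "\<epsilon> * (- \<bar>?e\<bar>) \<le> \<epsilon> * ?e"
          proof -
            have h: "- \<bar>?e\<bar> \<le> ?e" by linarith
            show ?thesis by (rule mult_left_mono[OF h]) (use e0 in simp)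
          qed
          ultimately have "0 \<le> ?D + \<epsilon> * ?e" by linarith
          moreover have "exv p (v0 + \<epsilon> *\<^sub>R w) i j = ?D + \<epsilon> * ?e"
            by (simp add: exv_add exv_scale exv0)
          ultimately show ?thesis by simp
        qed
        then show ?thesis using nn unfolding expansion_cone_def exv_def by blast
      qed
      then have "\<epsilon> *\<^sub>R w \<in> (\<lambda>x. x - v0) ` ?S" by (intro image_eqI[of _ _ "v0 + \<epsilon> *\<^sub>R w"]) simp_all
      then have "(1 / \<epsilon>) *\<^sub>R (\<epsilon> *\<^sub>R w) \<in> span ((\<lambda>x. x - v0) ` ?S)" by (intro span_mul span_base)
      then show "w \<in> span ((\<lambda>x. x - v0) ` ?S)" using e0 by simp
    qed
  qed
  have "dim ((\<lambda>x. x - v0) ` ?S) = dim ?L" by (metis dim_span span_eq)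
  then have "aff_dim ?S = int (2 * CARD('n) - 3)" using aff dimL[OF ne] by simp
  then show ?thesis using card3 by (simp add: of_nat_diff)
qed


lemma ce_sub:
  assumes "\<forall>i\<in>A. \<forall>j\<in>A. exv p v i j = 0"
  shows "complete_edges A \<subseteq> tight_edges p v"
proof
  fix x assume "x \<in> complete_edges A"
  then obtain i j where x: "x = {i,j}" "i \<in> A" "j \<in> A" "i \<noteq> j" unfolding complete_edges_def by blast
  then have "exv p v i j = 0" using assms by blast
  then show "x \<in> tight_edges p v" using x tight_iff by blast
qed

theorem lemma3p2:
  fixes p :: "real^2^'n" and i1 i2 :: 'n
  assumes "CARD('n) \<ge> 3"
    and "general_position p"
    and "i1 \<noteq> i2" and "(p$i1)$2 \<noteq> (p$i2)$2"
  shows "(polyhedron (expansion_cone p i1 i2) \<and> cone (expansion_cone p i1 i2) \<and>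
          0 extreme_point_of (expansion_cone p i1 i2) \<and>
          aff_dim (expansion_cone p i1 i2) = 2 * int CARD('n) - 3)
       \<and> (\<forall>v \<in> expansion_cone p i1 i2.
           (\<forall>a b c d. distinct [a,b,c,d] \<and> {a,b} \<in> tight_edges p v \<and> {c,d} \<in> tight_edges p v \<and>
               closed_segment (p$a) (p$b) \<inter> closed_segment (p$c) (p$d) \<noteq> {}
             \<longrightarrow> complete_edges {a,b,c,d} \<subseteq> tight_edges p v)
         \<and> (\<forall>k J. consecutive_angles_le_pi p k J \<and> (\<forall>j\<in>J. {k,j} \<in> tight_edges p v)
             \<longrightarrow> complete_edges (insert k J) \<subseteq> tight_edges p v)
         \<and> (\<forall>Q. convex_polygon p Q \<and> polygon_boundary_edges p Q \<subseteq> tight_edges p v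
             \<longrightarrow> complete_edges {m. p$m \<in> convex hull ((\<lambda>i. p$i) ` Q)} \<subseteq> tight_edges p v))"
proof -
  note gp = assms(2)
  have A: "polyhedron (expansion_cone p i1 i2) \<and> cone (expansion_cone p i1 i2) \<and>
          0 extreme_point_of (expansion_cone p i1 i2) \<and>
          aff_dim (expansion_cone p i1 i2) = 2 * int CARD('n) - 3"
    using exp_poly exp_cone zero_extreme[OF assms(2,3,4)] aff_dim_cone[OF assms(2,3,4,1)] by blast
  have B: "\<forall>v \<in> expansion_cone p i1 i2.
           (\<forall>a b c d. distinct [a,b,c,d] \<and> {a,b} \<in> tight_edges p v \<and> {c,d} \<in> tight_edges p v \<and>
               closed_segment (p$a) (p$b) \<inter> closed_segment (p$c) (p$d) \<noteq> {}
             \<longrightarrow> complete_edges {a,b,c,d} \<subseteq> tight_edges p v)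
         \<and> (\<forall>k J. consecutive_angles_le_pi p k J \<and> (\<forall>j\<in>J. {k,j} \<in> tight_edges p v)
             \<longrightarrow> complete_edges (insert k J) \<subseteq> tight_edges p v)
         \<and> (\<forall>Q. convex_polygon p Q \<and> polygon_boundary_edges p Q \<subseteq> tight_edges p v
             \<longrightarrow> complete_edges {m. p$m \<in> convex hull ((\<lambda>i. p$i) ` Q)} \<subseteq> tight_edges p v)"
    (is "\<forall>v\<in>_. ?P v")
  proof
    fix v assume v: "v \<in> expansion_cone p i1 i2"
    have ex: "\<forall>i j. 0 \<le> exv p v i j" using cone_exv[OF v] by blast
    have P1: "\<forall>a b c d. distinct [a,b,c,d] \<and> {a,b} \<in> tight_edges p v \<and> {c,d} \<in> tight_edges p v \<and>
               closed_segment (p$a) (p$b) \<inter> closed_segment (p$c) (p$d) \<noteq> {}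
             \<longrightarrow> complete_edges {a,b,c,d} \<subseteq> tight_edges p v"
    proof (intro allI impI)
      fix a b c d
      assume h: "distinct [a,b,c,d] \<and> {a,b} \<in> tight_edges p v \<and> {c,d} \<in> tight_edges p v \<and>
               closed_segment (p$a) (p$b) \<inter> closed_segment (p$c) (p$d) \<noteq> {}"
      have ab: "exv p v a b = 0" using h tight_iff by blast
      have cd: "exv p v c d = 0" using h tight_iff by blast
      have dist: "distinct [a,b,c,d]" using h by blast
      have seg: "closed_segment (p$a) (p$b) \<inter> closed_segment (p$c) (p$d) \<noteq> {}" using h by blast
      show "complete_edges {a,b,c,d} \<subseteq> tight_edges p v"
        by (rule ce_sub[OF part_i[OF gp ex dist ab cd seg]])
    qed
    have P2: "\<forall>k J. consecutive_angles_le_pi p k J \<and> (\<forall>j\<in>J. {k,j} \<in> tight_edges p v)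
             \<longrightarrow> complete_edges (insert k J) \<subseteq> tight_edges p v"
    proof (intro allI impI)
      fix k J
      assume h: "consecutive_angles_le_pi p k J \<and> (\<forall>j\<in>J. {k,j} \<in> tight_edges p v)"
      have ang: "consecutive_angles_le_pi p k J" using h by blast
      have tk: "\<forall>j\<in>J. exv p v k j = 0" using h tight_iff by blast
      show "complete_edges (insert k J) \<subseteq> tight_edges p v"
        by (rule ce_sub[OF part_ii[OF gp ex ang tk]])
    qed
    have P3: "\<forall>Q. convex_polygon p Q \<and> polygon_boundary_edges p Q \<subseteq> tight_edges p v
             \<longrightarrow> complete_edges {m. p$m \<in> convex hull ((\<lambda>i. p$i) ` Q)} \<subseteq> tight_edges p v"
    proof (intro allI impI)
      fix Q
      assume h: "convex_polygon p Q \<and> polygon_boundary_edges p Q \<subseteq> tight_edges p v"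
      have cp: "convex_polygon p Q" and bd: "polygon_boundary_edges p Q \<subseteq> tight_edges p v"
        using h by blast+
      have z: "\<forall>m m'. p$m \<in> convex hull ((\<lambda>i. p$i) ` Q) \<longrightarrow> p$m' \<in> convex hull ((\<lambda>i. p$i) ` Q)
          \<longrightarrow> exv p v m m' = 0" by (rule part_iii[OF gp ex cp bd])
      show "complete_edges {m. p$m \<in> convex hull ((\<lambda>i. p$i) ` Q)} \<subseteq> tight_edges p v"
        by (rule ce_sub) (use z in blast)
    qed
    show "?P v" using P1 P2 P3 by blast
  qed
  show ?thesis using A B by blast
qed


end
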